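(* Let ${}_{\mathfrak Y}\mathfrak B_{\mathfrak X}$ be a left-fibrant graph of bisets. If for all $y\in\mathfrak Y$ the maps $()^-\colon G_y\to G_{y^-}$ are injective, then for every vertex $z\in\mathfrak B$ the natural map \[B_z\to\pi_1(\mathfrak B,\lambda(z),\rho(z)),\qquad b\mapsto 1\otimes b\otimes 1,\] is injective.
   Context: Graphs and graphs of groups. A graph is a set $V\sqcup E$ with $x\mapsto x^-\in V$, $x\mapsto\bar x$, $\bar{\bar x}=x$, $x=x^-\iff x=\bar x\iff x\in V$; $x^+=(\bar x)^-$. Graph morphisms commute with these (may send edges to vertices); simplicial ones send edges to edges. A graph of groups is a connected graph with groups $G_x$ and homomorphisms $g\mapsto g^-\colon G_x\to G_{x^-}$, $g\mapsto\bar g\colon G_x\to G_{\bar x}$ ($G_x\to G_{\bar x}\to G_x$ identity, both identity for vertices); fundamental groupoid $\pi_1(\mathfrak X)$: objects $V$, generated by the $x\in\mathfrak X$ (from $x^-$ to $x^+$) and elements of the $G_v$, relations of the $G_v$, $v=1\in G_v$, $x\bar x=1$, $g^-x=xg^+$ ($g^+=(\bar g)^-$); $\pi_1(\mathfrak X,v,w)$ = morphisms from $v$ to $w$. Graphs of bisets: a graph $\mathfrak B$, graph morphisms $\lambda\colon\mathfrak B\to\mathfrak Y$, $\rho\colon\mathfrak B\to\mathfrak X$, $G_{\lambda(z)}$-$G_{\rho(z)}$-bisets $B_z$ and congruences $b\mapsto b^-\colon B_z\to B_{z^-}$, $b\mapsto\bar b\colon B_z\to B_{\bar z}$ w.r.t.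 the group homomorphisms (same axioms), $b^+=(\bar b)^-$. Fundamental biset $\pi_1(\mathfrak B,\dagger,* )$ for vertices $\dagger,*$: $\bigsqcup_{z\in V(\mathfrak B)}\pi_1(\mathfrak Y,\dagger,\lambda(z))\otimes_{G_{\lambda(z)}}B_z\otimes_{G_{\rho(z)}}\pi_1(\mathfrak X,\rho(z),* )$ modulo $q\otimes b^-\otimes p=q\lambda(z)\otimes b^+\otimes\overline{\rho(z)}p$ for edges $z$ ($\lambda(z),\overline{\rho(z)}$ groupoid morphisms, trivial if vertices). Left-fibrant: $\rho$ simplicial and for every vertex $v\in\mathfrak B$ and edge $f\in\mathfrak X$ with $f^-=\rho(v)$, the map $\bigsqcup_{e\in\rho^{-1}(f),\,e^-=v}G_{\lambda(v)}\otimes_{G_{\lambda(e)}}B_e\to B_v$, $g\otimes b\mapsto gb^-$, is an isomorphism of $G_{\lambda(v)}$-$G_f$-bisets. *)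

theory Defs
  imports "HOL-Algebra.Group"
begin

text \<open>A graph is a set X with maps x \<mapsto> x^- (src) and x \<mapsto> x-bar (rev).\<close>

definition is_graph :: "'x set \<Rightarrow> ('x \<Rightarrow> 'x) \<Rightarrow> ('x \<Rightarrow> 'x) \<Rightarrow> bool" where
  "is_graph X s r \<longleftrightarrow>
     (\<forall>x\<in>X. s x \<in> X \<and> r x \<in> X \<and> s (s x) = s x \<and> r (r x) = x
            \<and> (x = s x \<longleftrightarrow> x = r x))"

definition verts :: "'x set \<Rightarrow> ('x \<Rightarrow> 'x) \<Rightarrow> 'x set" where
  "verts X s = {x\<in>X. s x = x}"

definition edges :: "'x set \<Rightarrow> ('x \<Rightarrow> 'x) \<Rightarrow> 'x set" where
  "edges X s = {x\<in>X. s x \<noteq> x}"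

definition graph_connected :: "'x set \<Rightarrow> ('x \<Rightarrow> 'x) \<Rightarrow> ('x \<Rightarrow> 'x) \<Rightarrow> bool" where
  "graph_connected X s r \<longleftrightarrow> verts X s \<noteq> {} \<and>
     (\<forall>v\<in>verts X s. \<forall>w\<in>verts X s. (v, w) \<in> {(s x, s (r x)) | x. x \<in> X}\<^sup>*)"

definition graph_morphism ::
  "'x set \<Rightarrow> ('x \<Rightarrow> 'x) \<Rightarrow> ('x \<Rightarrow> 'x) \<Rightarrow> 'y set \<Rightarrow> ('y \<Rightarrow> 'y) \<Rightarrow> ('y \<Rightarrow> 'y)
   \<Rightarrow> ('x \<Rightarrow> 'y) \<Rightarrow> bool" where
  "graph_morphism X s r Y s' r' f \<longleftrightarrow>
     (\<forall>x\<in>X. f x \<in> Y \<and> f (s x) = s' (f x) \<and> f (r x) = r' (f x))"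

record ('x, 'g) gog =
  gog_car :: "'x set"
  gog_src :: "'x \<Rightarrow> 'x"
  gog_rev :: "'x \<Rightarrow> 'x"
  gog_grp :: "'x \<Rightarrow> 'g monoid"
  gog_hsrc :: "'x \<Rightarrow> 'g \<Rightarrow> 'g"
  gog_hrev :: "'x \<Rightarrow> 'g \<Rightarrow> 'g"

definition gverts :: "('x, 'g) gog \<Rightarrow> 'x set" where
  "gverts \<Gamma> = verts (gog_car \<Gamma>) (gog_src \<Gamma>)"

definition gedges :: "('x, 'g) gog \<Rightarrow> 'x set" where
  "gedges \<Gamma> = edges (gog_car \<Gamma>) (gog_src \<Gamma>)"

definition gtgt :: "('x, 'g) gog \<Rightarrow> 'x \<Rightarrow> 'x" where
  "gtgt \<Gamma> x = gog_src \<Gamma> (gog_rev \<Gamma> x)"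

definition hplus :: "('x, 'g) gog \<Rightarrow> 'x \<Rightarrow> 'g \<Rightarrow> 'g" where
  "hplus \<Gamma> x g = gog_hsrc \<Gamma> (gog_rev \<Gamma> x) (gog_hrev \<Gamma> x g)"

definition graph_of_groups :: "('x, 'g) gog \<Rightarrow> bool" where
  "graph_of_groups \<Gamma> \<longleftrightarrow>
     is_graph (gog_car \<Gamma>) (gog_src \<Gamma>) (gog_rev \<Gamma>) \<and>
     graph_connected (gog_car \<Gamma>) (gog_src \<Gamma>) (gog_rev \<Gamma>) \<and>
     (\<forall>x\<in>gog_car \<Gamma>.
        group (gog_grp \<Gamma> x) \<and>
        gog_hsrc \<Gamma> x \<in> hom (gog_grp \<Gamma> x) (gog_grp \<Gamma> (gog_src \<Gamma> x)) \<and>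
        gog_hrev \<Gamma> x \<in> hom (gog_grp \<Gamma> x) (gog_grp \<Gamma> (gog_rev \<Gamma> x)) \<and>
        (\<forall>g\<in>carrier (gog_grp \<Gamma> x). gog_hrev \<Gamma> (gog_rev \<Gamma> x) (gog_hrev \<Gamma> x g) = g)) \<and>
     (\<forall>v\<in>gverts \<Gamma>. \<forall>g\<in>carrier (gog_grp \<Gamma> v).
        gog_hsrc \<Gamma> v g = g \<and> gog_hrev \<Gamma> v g = g)"

text \<open>Words: generators Gen x (x any element of the graph, from x^- to x^+)
  and Elt v g (g in G_v, a loop at the vertex v).\<close>

datatype ('x, 'g) letter = Gen 'x | Elt 'x 'g

fun valid_word :: "('x, 'g) gog \<Rightarrow> ('x, 'g) letter list \<Rightarrow> 'x \<Rightarrow> 'x \<Rightarrow> bool" where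
  "valid_word \<Gamma> [] v w \<longleftrightarrow> v \<in> gverts \<Gamma> \<and> v = w"
| "valid_word \<Gamma> (Gen x # ws) v w \<longleftrightarrow>
     x \<in> gog_car \<Gamma> \<and> gog_src \<Gamma> x = v \<and> valid_word \<Gamma> ws (gtgt \<Gamma> x) w"
| "valid_word \<Gamma> (Elt u g # ws) v w \<longleftrightarrow>
     u \<in> gverts \<Gamma> \<and> u = v \<and> g \<in> carrier (gog_grp \<Gamma> u) \<and> valid_word \<Gamma> ws u w"

inductive_set basic_rel :: "('x, 'g) gog \<Rightarrow> (('x, 'g) letter list \<times> ('x, 'g) letter list) set"
  for \<Gamma> where
  mult: "\<lbrakk>v \<in> gverts \<Gamma>; g \<in> carrier (gog_grp \<Gamma> v); h \<in> carrier (gog_grp \<Gamma> v)\<rbrakk>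
         \<Longrightarrow> ([Elt v g, Elt v h], [Elt v (g \<otimes>\<^bsub>gog_grp \<Gamma> v\<^esub> h)]) \<in> basic_rel \<Gamma>"
| one: "v \<in> gverts \<Gamma> \<Longrightarrow> ([Elt v \<one>\<^bsub>gog_grp \<Gamma> v\<^esub>], []) \<in> basic_rel \<Gamma>"
| vert: "v \<in> gverts \<Gamma> \<Longrightarrow> ([Gen v], []) \<in> basic_rel \<Gamma>"
| inv: "x \<in> gog_car \<Gamma> \<Longrightarrow> ([Gen x, Gen (gog_rev \<Gamma> x)], []) \<in> basic_rel \<Gamma>"
| conj: "\<lbrakk>x \<in> gog_car \<Gamma>; g \<in> carrier (gog_grp \<Gamma> x)\<rbrakk>
         \<Longrightarrow> ([Elt (gog_src \<Gamma> x) (gog_hsrc \<Gamma> x g), Gen x],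
              [Gen x, Elt (gtgt \<Gamma> x) (hplus \<Gamma> x g)]) \<in> basic_rel \<Gamma>"

definition word_step :: "('x, 'g) gog \<Rightarrow> (('x, 'g) letter list \<times> ('x, 'g) letter list) set" where
  "word_step \<Gamma> = {(u @ l @ t, u @ r @ t) | u l r t. (l, r) \<in> basic_rel \<Gamma>}"

definition eqc :: "'a set \<Rightarrow> ('a \<times> 'a) set \<Rightarrow> ('a \<times> 'a) set" where
  "eqc A r = Id_on A \<union> ((r \<inter> A \<times> A) \<union> (r \<inter> A \<times> A)\<inverse>)\<^sup>+"

definition paths :: "('x, 'g) gog \<Rightarrow> 'x \<Rightarrow> 'x \<Rightarrow> ('x, 'g) letter list set" where
  "paths \<Gamma> v w = {ws. valid_word \<Gamma> ws v w}"

definition path_eq :: "('x, 'g) gog \<Rightarrow> 'x \<Rightarrow> 'x \<Rightarrow> (('x, 'g) letter list \<times> ('x, 'g) letter list) set" where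
  "path_eq \<Gamma> v w = eqc (paths \<Gamma> v w) (word_step \<Gamma>)"

definition pi1 :: "('x, 'g) gog \<Rightarrow> 'x \<Rightarrow> 'x \<Rightarrow> ('x, 'g) letter list set set" where
  "pi1 \<Gamma> v w = paths \<Gamma> v w // path_eq \<Gamma> v w"

definition is_biset :: "'g monoid \<Rightarrow> 'h monoid \<Rightarrow> 'b set \<Rightarrow> ('g \<Rightarrow> 'b \<Rightarrow> 'b) \<Rightarrow> ('b \<Rightarrow> 'h \<Rightarrow> 'b) \<Rightarrow> bool" where
  "is_biset G H B la ra \<longleftrightarrow>
     (\<forall>g\<in>carrier G. \<forall>b\<in>B. la g b \<in> B) \<and>
     (\<forall>b\<in>B. \<forall>h\<in>carrier H. ra b h \<in> B) \<and>
     (\<forall>b\<in>B. la \<one>\<^bsub>G\<^esub> b = b \<and> ra b \<one>\<^bsub>H\<^esub> = b) \<and>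
     (\<forall>g\<in>carrier G. \<forall>g'\<in>carrier G. \<forall>b\<in>B. la (g \<otimes>\<^bsub>G\<^esub> g') b = la g (la g' b)) \<and>
     (\<forall>h\<in>carrier H. \<forall>h'\<in>carrier H. \<forall>b\<in>B. ra b (h \<otimes>\<^bsub>H\<^esub> h') = ra (ra b h) h') \<and>
     (\<forall>g\<in>carrier G. \<forall>h\<in>carrier H. \<forall>b\<in>B. la g (ra b h) = ra (la g b) h)"

record ('z, 'y, 'x, 'b, 'g, 'h) gob =
  gob_car :: "'z set"
  gob_src :: "'z \<Rightarrow> 'z"
  gob_rev :: "'z \<Rightarrow> 'z"
  gob_lam :: "'z \<Rightarrow> 'y"
  gob_rho :: "'z \<Rightarrow> 'x"
  gob_set :: "'z \<Rightarrow> 'b set"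
  gob_lact :: "'z \<Rightarrow> 'g \<Rightarrow> 'b \<Rightarrow> 'b"
  gob_ract :: "'z \<Rightarrow> 'b \<Rightarrow> 'h \<Rightarrow> 'b"
  gob_csrc :: "'z \<Rightarrow> 'b \<Rightarrow> 'b"
  gob_crev :: "'z \<Rightarrow> 'b \<Rightarrow> 'b"

definition bverts :: "('z, 'y, 'x, 'b, 'g, 'h) gob \<Rightarrow> 'z set" where
  "bverts B = verts (gob_car B) (gob_src B)"

definition bedges :: "('z, 'y, 'x, 'b, 'g, 'h) gob \<Rightarrow> 'z set" where
  "bedges B = edges (gob_car B) (gob_src B)"

definition btgt :: "('z, 'y, 'x, 'b, 'g, 'h) gob \<Rightarrow> 'z \<Rightarrow> 'z" where
  "btgt B z = gob_src B (gob_rev B z)"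

definition bplus :: "('z, 'y, 'x, 'b, 'g, 'h) gob \<Rightarrow> 'z \<Rightarrow> 'b \<Rightarrow> 'b" where
  "bplus B z b = gob_csrc B (gob_rev B z) (gob_crev B z b)"

definition graph_of_bisets ::
  "('z, 'y, 'x, 'b, 'g, 'h) gob \<Rightarrow> ('y, 'g) gog \<Rightarrow> ('x, 'h) gog \<Rightarrow> bool" where
  "graph_of_bisets B Y X \<longleftrightarrow>
     graph_of_groups Y \<and> graph_of_groups X \<and>
     is_graph (gob_car B) (gob_src B) (gob_rev B) \<and>
     graph_morphism (gob_car B) (gob_src B) (gob_rev B) (gog_car Y) (gog_src Y) (gog_rev Y) (gob_lam B) \<and>
     graph_morphism (gob_car B) (gob_src B) (gob_rev B) (gog_car X) (gog_src X) (gog_rev X) (gob_rho B) \<and>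
     (\<forall>z\<in>gob_car B.
        is_biset (gog_grp Y (gob_lam B z)) (gog_grp X (gob_rho B z)) (gob_set B z)
                 (gob_lact B z) (gob_ract B z) \<and>
        (\<forall>b\<in>gob_set B z.
           gob_csrc B z b \<in> gob_set B (gob_src B z) \<and>
           gob_crev B z b \<in> gob_set B (gob_rev B z) \<and>
           gob_crev B (gob_rev B z) (gob_crev B z b) = b) \<and>
        (\<forall>g\<in>carrier (gog_grp Y (gob_lam B z)). \<forall>b\<in>gob_set B z.
           gob_csrc B z (gob_lact B z g b)
             = gob_lact B (gob_src B z) (gog_hsrc Y (gob_lam B z) g) (gob_csrc B z b) \<and>
           gob_crev B z (gob_lact B z g b)
             = gob_lact B (gob_rev B z) (gog_hrev Y (gob_lam B z) g) (gob_crev B z b)) \<and>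
        (\<forall>h\<in>carrier (gog_grp X (gob_rho B z)). \<forall>b\<in>gob_set B z.
           gob_csrc B z (gob_ract B z b h)
             = gob_ract B (gob_src B z) (gob_csrc B z b) (gog_hsrc X (gob_rho B z) h) \<and>
           gob_crev B z (gob_ract B z b h)
             = gob_ract B (gob_rev B z) (gob_crev B z b) (gog_hrev X (gob_rho B z) h))) \<and>
     (\<forall>v\<in>bverts B. \<forall>b\<in>gob_set B v. gob_csrc B v b = b \<and> gob_crev B v b = b)"

text \<open>The biset (disjoint union over e) of G_{lambda v} \<otimes>_{G_{lambda e}} B_e,
  as a quotient of triples (e, g, b).\<close>

definition fib_dom ::
  "('z, 'y, 'x, 'b, 'g, 'h) gob \<Rightarrow> ('y, 'g) gog \<Rightarrow> 'z \<Rightarrow> 'x \<Rightarrow> ('z \<times> 'g \<times> 'b) set" where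
  "fib_dom B Y v f = {(e, g, b). e \<in> bedges B \<and> gob_rho B e = f \<and> gob_src B e = v \<and>
                        g \<in> carrier (gog_grp Y (gob_lam B v)) \<and> b \<in> gob_set B e}"

definition fib_rel ::
  "('z, 'y, 'x, 'b, 'g, 'h) gob \<Rightarrow> ('y, 'g) gog \<Rightarrow> 'z \<Rightarrow> 'x \<Rightarrow> (('z \<times> 'g \<times> 'b) \<times> ('z \<times> 'g \<times> 'b)) set" where
  "fib_rel B Y v f = eqc (fib_dom B Y v f)
     {((e, g \<otimes>\<^bsub>gog_grp Y (gob_lam B v)\<^esub> gog_hsrc Y (gob_lam B e) k, b), (e, g, gob_lact B e k b))
       | e g k b. k \<in> carrier (gog_grp Y (gob_lam B e))}"

definition fib_map :: "('z, 'y, 'x, 'b, 'g, 'h) gob \<Rightarrow> 'z \<Rightarrow> ('z \<times> 'g \<times> 'b) \<Rightarrow> 'b" where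
  "fib_map B v = (\<lambda>(e, g, b). gob_lact B v g (gob_csrc B e b))"

definition left_fibrant ::
  "('z, 'y, 'x, 'b, 'g, 'h) gob \<Rightarrow> ('y, 'g) gog \<Rightarrow> ('x, 'h) gog \<Rightarrow> bool" where
  "left_fibrant B Y X \<longleftrightarrow>
     (\<forall>e\<in>bedges B. gob_rho B e \<in> gedges X) \<and>
     (\<forall>v\<in>bverts B. \<forall>f\<in>gedges X. gog_src X f = gob_rho B v \<longrightarrow>
        bij_betw (\<lambda>c. the_elem (fib_map B v ` c))
                 (fib_dom B Y v f // fib_rel B Y v f) (gob_set B v))"

text \<open>Elements are represented by tuples (z, q, b, p) standing for q \<otimes> b \<otimes> p.\<close>

definition fb_dom ::
  "('z, 'y, 'x, 'b, 'g, 'h) gob \<Rightarrow> ('y, 'g) gog \<Rightarrow> ('x, 'h) gog \<Rightarrow> 'y \<Rightarrow> 'x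
   \<Rightarrow> ('z \<times> ('y, 'g) letter list \<times> 'b \<times> ('x, 'h) letter list) set" where
  "fb_dom B Y X d s = {(z, q, b, p). z \<in> bverts B \<and> valid_word Y q d (gob_lam B z) \<and>
                          b \<in> gob_set B z \<and> valid_word X p (gob_rho B z) s}"

definition fb_gen ::
  "('z, 'y, 'x, 'b, 'g, 'h) gob \<Rightarrow> ('y, 'g) gog \<Rightarrow> ('x, 'h) gog
   \<Rightarrow> (('z \<times> ('y, 'g) letter list \<times> 'b \<times> ('x, 'h) letter list) \<times>
       ('z \<times> ('y, 'g) letter list \<times> 'b \<times> ('x, 'h) letter list)) set" where
  "fb_gen B Y X =
     {((z, q, b, p), (z, q', b, p)) | z q q' b p. (q, q') \<in> word_step Y} \<union>
     {((z, q, b, p), (z, q, b, p')) | z q b p p'. (p, p') \<in> word_step X} \<union>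
     {((z, q @ [Elt (gob_lam B z) g], b, p), (z, q, gob_lact B z g b, p)) | z q g b p. True} \<union>
     {((z, q, gob_ract B z b h, p), (z, q, b, Elt (gob_rho B z) h # p)) | z q b h p. True} \<union>
     {((gob_src B e, q, gob_csrc B e b, p),
       (btgt B e, q @ [Gen (gob_lam B e)], bplus B e b, Gen (gog_rev X (gob_rho B e)) # p))
       | e q b p. e \<in> bedges B \<and> b \<in> gob_set B e}"

definition fb_rel ::
  "('z, 'y, 'x, 'b, 'g, 'h) gob \<Rightarrow> ('y, 'g) gog \<Rightarrow> ('x, 'h) gog \<Rightarrow> 'y \<Rightarrow> 'x
   \<Rightarrow> (('z \<times> ('y, 'g) letter list \<times> 'b \<times> ('x, 'h) letter list) \<times>
       ('z \<times> ('y, 'g) letter list \<times> 'b \<times> ('x, 'h) letter list)) set" where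
  "fb_rel B Y X d s = eqc (fb_dom B Y X d s) (fb_gen B Y X)"

definition fund_biset ::
  "('z, 'y, 'x, 'b, 'g, 'h) gob \<Rightarrow> ('y, 'g) gog \<Rightarrow> ('x, 'h) gog \<Rightarrow> 'y \<Rightarrow> 'x
   \<Rightarrow> ('z \<times> ('y, 'g) letter list \<times> 'b \<times> ('x, 'h) letter list) set set" where
  "fund_biset B Y X d s = fb_dom B Y X d s // fb_rel B Y X d s"

definition nat_map ::
  "('z, 'y, 'x, 'b, 'g, 'h) gob \<Rightarrow> ('y, 'g) gog \<Rightarrow> ('x, 'h) gog \<Rightarrow> 'z \<Rightarrow> 'b
   \<Rightarrow> ('z \<times> ('y, 'g) letter list \<times> 'b \<times> ('x, 'h) letter list) set" where
  "nat_map B Y X z b = fb_rel B Y X (gob_lam B z) (gob_rho B z) `` {(z, [], b, [])}"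

end

theory Submission
  imports Defs
begin


lemma gog_facts:
  assumes "graph_of_groups \<Gamma>" "x \<in> gog_car \<Gamma>"
  shows "gog_src \<Gamma> x \<in> gog_car \<Gamma>" "gog_rev \<Gamma> x \<in> gog_car \<Gamma>"
    "gog_src \<Gamma> (gog_src \<Gamma> x) = gog_src \<Gamma> x" "gog_rev \<Gamma> (gog_rev \<Gamma> x) = x"
    "(x = gog_src \<Gamma> x) = (x = gog_rev \<Gamma> x)"
    "group (gog_grp \<Gamma> x)"
    "gog_hsrc \<Gamma> x \<in> hom (gog_grp \<Gamma> x) (gog_grp \<Gamma> (gog_src \<Gamma> x))"
    "gog_hrev \<Gamma> x \<in> hom (gog_grp \<Gamma> x) (gog_grp \<Gamma> (gog_rev \<Gamma> x))"
    "\<And>g. g\<in>carrier (gog_grp \<Gamma> x) \<Longrightarrow> gog_hrev \<Gamma> (gog_rev \<Gamma> x) (gog_hrev \<Gamma> x g) = g"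
  using assms unfolding graph_of_groups_def is_graph_def by auto

lemma gog_vert:
  assumes "graph_of_groups \<Gamma>" "x \<in> gog_car \<Gamma>" "gog_src \<Gamma> x = x" "g\<in>carrier (gog_grp \<Gamma> x)"
  shows "gog_hsrc \<Gamma> x g = g" "gog_hrev \<Gamma> x g = g"
  using assms unfolding graph_of_groups_def gverts_def verts_def by auto



locale L18 =
  fixes B :: "('z,'y,'x,'b,'g,'h) gob" and Y :: "('y,'g) gog" and X :: "('x,'h) gog"
  assumes gob: "graph_of_bisets B Y X" and fibr: "left_fibrant B Y X"
    and injY: "\<forall>y\<in>gog_car Y. inj_on (gog_hsrc Y y) (carrier (gog_grp Y y))"
begin

lemma grY: "graph_of_groups Y" and grX: "graph_of_groups X"
  using gob unfolding graph_of_bisets_def by auto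

abbreviation "GG x \<equiv> gog_grp Y x"
abbreviation "sm x \<equiv> gog_hsrc Y x"
abbreviation "sY \<equiv> gog_src Y"
abbreviation "rY \<equiv> gog_rev Y"

lemmas fY = gog_facts[OF grY]
lemmas fX = gog_facts[OF grX]

lemma grp_src: "x \<in> gog_car Y \<Longrightarrow> group (GG (sY x))"
  using fY(1) fY(6) by blast

definition Im :: "'y \<Rightarrow> 'g set" where
  "Im x = sm x ` carrier (GG x)"

lemma ghom: "x \<in> gog_car Y \<Longrightarrow> group_hom (GG x) (GG (sY x)) (sm x)"
  unfolding group_hom_def group_hom_axioms_def using fY(6,7)[of x] grp_src[of x] by auto

lemma Im_sub: "x \<in> gog_car Y \<Longrightarrow> subgroup (Im x) (GG (sY x))"
  unfolding Im_def using group_hom.img_is_subgroup[OF ghom] by auto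

lemma Im_I: "x \<in> gog_car Y \<Longrightarrow> k \<in> carrier (GG x) \<Longrightarrow> sm x k \<in> Im x"
  unfolding Im_def by auto

definition rep :: "'y \<Rightarrow> 'g \<Rightarrow> 'g" where
  "rep x a = (if a \<in> Im x then \<one>\<^bsub>GG (sY x)\<^esub> else
     (SOME t. t \<in> carrier (GG (sY x)) \<and> inv\<^bsub>GG (sY x)\<^esub> t \<otimes>\<^bsub>GG (sY x)\<^esub> a \<in> Im x))"

lemma rep_prop:
  assumes x: "x \<in> gog_car Y" and a: "a \<in> carrier (GG (sY x))"
  shows "rep x a \<in> carrier (GG (sY x)) \<and> inv\<^bsub>GG (sY x)\<^esub> (rep x a) \<otimes>\<^bsub>GG (sY x)\<^esub> a \<in> Im x"
proof -
  interpret H: group "GG (sY x)" using grp_src[OF x] .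
  interpret S: subgroup "Im x" "GG (sY x)" using Im_sub[OF x] .
  show ?thesis
  proof (cases "a \<in> Im x")
    case True thus ?thesis unfolding rep_def using a by simp
  next
    case False
    have "\<exists>t. t \<in> carrier (GG (sY x)) \<and> inv\<^bsub>GG (sY x)\<^esub> t \<otimes>\<^bsub>GG (sY x)\<^esub> a \<in> Im x"
      using a by (intro exI[of _ a]) simp
    from someI_ex[OF this] False show ?thesis unfolding rep_def by simp
  qed
qed

lemma rep_cong:
  assumes x: "x \<in> gog_car Y" and a: "a \<in> carrier (GG (sY x))" and b: "b \<in> carrier (GG (sY x))"
    and ab: "inv\<^bsub>GG (sY x)\<^esub> a \<otimes>\<^bsub>GG (sY x)\<^esub> b \<in> Im x"
  shows "rep x a = rep x b"
proof -
  interpret H: group "GG (sY x)" using grp_src[OF x] .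
  interpret S: subgroup "Im x" "GG (sY x)" using Im_sub[OF x] .
  let ?G = "GG (sY x)"
  have ba: "inv\<^bsub>?G\<^esub> b \<otimes>\<^bsub>?G\<^esub> a \<in> Im x"
    using S.m_inv_closed[OF ab] a b by (simp add: H.inv_mult_group)
  have 1: "a \<in> Im x \<longleftrightarrow> b \<in> Im x"
  proof
    assume "a \<in> Im x" then have "a \<otimes>\<^bsub>?G\<^esub> (inv\<^bsub>?G\<^esub> a \<otimes>\<^bsub>?G\<^esub> b) \<in> Im x" using ab by simp
    thus "b \<in> Im x" using a b by (simp add: H.m_assoc[symmetric])
  next
    assume "b \<in> Im x" then have "b \<otimes>\<^bsub>?G\<^esub> (inv\<^bsub>?G\<^esub> b \<otimes>\<^bsub>?G\<^esub> a) \<in> Im x" using ba by simp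
    thus "a \<in> Im x" using a b by (simp add: H.m_assoc[symmetric])
  qed
  have 2: "(\<lambda>t. t \<in> carrier ?G \<and> inv\<^bsub>?G\<^esub> t \<otimes>\<^bsub>?G\<^esub> a \<in> Im x) =
           (\<lambda>t. t \<in> carrier ?G \<and> inv\<^bsub>?G\<^esub> t \<otimes>\<^bsub>?G\<^esub> b \<in> Im x)"
  proof (rule ext, rule iffI)
    fix t assume t: "t \<in> carrier ?G \<and> inv\<^bsub>?G\<^esub> t \<otimes>\<^bsub>?G\<^esub> a \<in> Im x"
    then have "(inv\<^bsub>?G\<^esub> t \<otimes>\<^bsub>?G\<^esub> a) \<otimes>\<^bsub>?G\<^esub> (inv\<^bsub>?G\<^esub> a \<otimes>\<^bsub>?G\<^esub> b) \<in> Im x" using ab by simp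
    moreover have "(inv\<^bsub>?G\<^esub> t \<otimes>\<^bsub>?G\<^esub> a) \<otimes>\<^bsub>?G\<^esub> (inv\<^bsub>?G\<^esub> a \<otimes>\<^bsub>?G\<^esub> b) = inv\<^bsub>?G\<^esub> t \<otimes>\<^bsub>?G\<^esub> b"
      using t a b by (metis H.m_assoc H.inv_closed H.m_closed H.r_inv H.l_one)
    ultimately show "t \<in> carrier ?G \<and> inv\<^bsub>?G\<^esub> t \<otimes>\<^bsub>?G\<^esub> b \<in> Im x"
      using t by simp
  next
    fix t assume t: "t \<in> carrier ?G \<and> inv\<^bsub>?G\<^esub> t \<otimes>\<^bsub>?G\<^esub> b \<in> Im x"
    then have "(inv\<^bsub>?G\<^esub> t \<otimes>\<^bsub>?G\<^esub> b) \<otimes>\<^bsub>?G\<^esub> (inv\<^bsub>?G\<^esub> b \<otimes>\<^bsub>?G\<^esub> a) \<in> Im x" using ba by simp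
    moreover have "(inv\<^bsub>?G\<^esub> t \<otimes>\<^bsub>?G\<^esub> b) \<otimes>\<^bsub>?G\<^esub> (inv\<^bsub>?G\<^esub> b \<otimes>\<^bsub>?G\<^esub> a) = inv\<^bsub>?G\<^esub> t \<otimes>\<^bsub>?G\<^esub> a"
      using t a b by (metis H.m_assoc H.inv_closed H.m_closed H.r_inv H.l_one)
    ultimately show "t \<in> carrier ?G \<and> inv\<^bsub>?G\<^esub> t \<otimes>\<^bsub>?G\<^esub> a \<in> Im x"
      using t by simp
  qed
  show ?thesis unfolding rep_def using 1 2 by simp
qed

lemma rep_mult:
  assumes x: "x \<in> gog_car Y" and a: "a \<in> carrier (GG (sY x))" and k: "k \<in> carrier (GG x)"
  shows "rep x (a \<otimes>\<^bsub>GG (sY x)\<^esub> sm x k) = rep x a"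
proof -
  interpret H: group "GG (sY x)" using grp_src[OF x] .
  interpret S: subgroup "Im x" "GG (sY x)" using Im_sub[OF x] .
  have smk: "sm x k \<in> carrier (GG (sY x))" using Im_I[OF x k] subgroup.mem_carrier[OF Im_sub[OF x]] by blast
  show ?thesis
    by (rule rep_cong[symmetric], fact x, fact a, simp add: a smk)
       (simp add: a smk H.m_assoc[symmetric] Im_I[OF x k])
qed

lemma rep_one_iff:
  assumes x: "x \<in> gog_car Y" and a: "a \<in> carrier (GG (sY x))"
  shows "rep x a = \<one>\<^bsub>GG (sY x)\<^esub> \<longleftrightarrow> a \<in> Im x"
proof -
  interpret H: group "GG (sY x)" using grp_src[OF x] .
  show ?thesis
  proof
    assume "rep x a = \<one>\<^bsub>GG (sY x)\<^esub>"
    thus "a \<in> Im x" using rep_prop[OF x a] a by simp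
  qed (simp add: rep_def)
qed

definition kq :: "'y \<Rightarrow> 'g \<Rightarrow> 'g" where
  "kq x a = (THE k. k \<in> carrier (GG x) \<and> sm x k = inv\<^bsub>GG (sY x)\<^esub> (rep x a) \<otimes>\<^bsub>GG (sY x)\<^esub> a)"

lemma kq_prop:
  assumes x: "x \<in> gog_car Y" and a: "a \<in> carrier (GG (sY x))"
  shows "kq x a \<in> carrier (GG x) \<and> a = rep x a \<otimes>\<^bsub>GG (sY x)\<^esub> sm x (kq x a)"
proof -
  interpret H: group "GG (sY x)" using grp_src[OF x] .
  let ?G = "GG (sY x)"
  have "inv\<^bsub>?G\<^esub> (rep x a) \<otimes>\<^bsub>?G\<^esub> a \<in> sm x ` carrier (GG x)"
    using rep_prop[OF x a] unfolding Im_def by blast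
  then obtain k where k: "k \<in> carrier (GG x)" "sm x k = inv\<^bsub>?G\<^esub> (rep x a) \<otimes>\<^bsub>?G\<^esub> a"
    by (metis imageE)
  have inj: "inj_on (sm x) (carrier (GG x))" using injY x by blast
  have u: "\<And>k'. k' \<in> carrier (GG x) \<and> sm x k' = inv\<^bsub>?G\<^esub> (rep x a) \<otimes>\<^bsub>?G\<^esub> a \<Longrightarrow> k' = k"
  proof -
    fix k' assume "k' \<in> carrier (GG x) \<and> sm x k' = inv\<^bsub>?G\<^esub> (rep x a) \<otimes>\<^bsub>?G\<^esub> a"
    then show "k' = k" using inj_onD[OF inj, of k' k] k by simp
  qed
  have "kq x a = k" unfolding kq_def
    by (rule the_equality) (rule conjI[OF k(1) k(2)], erule u)
  moreover have "a = rep x a \<otimes>\<^bsub>?G\<^esub> sm x k"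
    using k rep_prop[OF x a] a by (simp add: H.m_assoc[symmetric])
  ultimately show ?thesis using k by simp
qed

lemma rep_idem:
  assumes x: "x \<in> gog_car Y" and a: "a \<in> carrier (GG (sY x))"
  shows "rep x (rep x a) = rep x a"
proof -
  have "rep x (rep x a \<otimes>\<^bsub>GG (sY x)\<^esub> sm x (kq x a)) = rep x (rep x a)"
    using rep_mult[OF x _ ] rep_prop[OF x a] kq_prop[OF x a] by blast
  thus ?thesis using kq_prop[OF x a] by simp
qed

lemma fixed:
  assumes x: "x \<in> gog_car Y" and t: "t \<in> carrier (GG (sY x))" and rt: "rep x t = t"
    and k: "k \<in> carrier (GG x)"
  shows "rep x (t \<otimes>\<^bsub>GG (sY x)\<^esub> sm x k) = t" "kq x (t \<otimes>\<^bsub>GG (sY x)\<^esub> sm x k) = k"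
proof -
  interpret H: group "GG (sY x)" using grp_src[OF x] .
  let ?G = "GG (sY x)"
  have smk: "sm x k \<in> carrier ?G" using Im_I[OF x k] subgroup.mem_carrier[OF Im_sub[OF x]] by blast
  show r: "rep x (t \<otimes>\<^bsub>?G\<^esub> sm x k) = t" using rep_mult[OF x t k] rt by simp
  have a: "t \<otimes>\<^bsub>?G\<^esub> sm x k \<in> carrier ?G" using t smk by simp
  from kq_prop[OF x a] r have eq: "t \<otimes>\<^bsub>?G\<^esub> sm x k = t \<otimes>\<^bsub>?G\<^esub> sm x (kq x (t \<otimes>\<^bsub>?G\<^esub> sm x k))"
    by simp
  then have "sm x k = sm x (kq x (t \<otimes>\<^bsub>?G\<^esub> sm x k))"
  proof -
    have kc: "kq x (t \<otimes>\<^bsub>?G\<^esub> sm x k) \<in> carrier (GG x)" using kq_prop[OF x a] by blast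
    have "sm x (kq x (t \<otimes>\<^bsub>?G\<^esub> sm x k)) \<in> carrier ?G"
      using Im_I[OF x kc] subgroup.mem_carrier[OF Im_sub[OF x]] by blast
    thus ?thesis using t smk eq by simp
  qed
  then show "kq x (t \<otimes>\<^bsub>?G\<^esub> sm x k) = k"
    using injY x k kq_prop[OF x a] unfolding inj_on_def by metis
qed

lemma red_keep:
  assumes x: "x \<in> gog_car Y" and m: "m \<in> Im x" and t: "t \<in> carrier (GG (sY x))"
    and rt: "rep x t = t" and t1: "t \<noteq> \<one>\<^bsub>GG (sY x)\<^esub>"
  shows "rep x (m \<otimes>\<^bsub>GG (sY x)\<^esub> t) \<noteq> \<one>\<^bsub>GG (sY x)\<^esub>"
proof
  interpret H: group "GG (sY x)" using grp_src[OF x] .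
  interpret S: subgroup "Im x" "GG (sY x)" using Im_sub[OF x] .
  assume "rep x (m \<otimes>\<^bsub>GG (sY x)\<^esub> t) = \<one>\<^bsub>GG (sY x)\<^esub>"
  then have "m \<otimes>\<^bsub>GG (sY x)\<^esub> t \<in> Im x" using rep_one_iff[OF x] m t by simp
  then have "inv\<^bsub>GG (sY x)\<^esub> m \<otimes>\<^bsub>GG (sY x)\<^esub> (m \<otimes>\<^bsub>GG (sY x)\<^esub> t) \<in> Im x" using m by simp
  then have "t \<in> Im x" using m t by (simp add: H.m_assoc[symmetric])
  then have "rep x t = \<one>\<^bsub>GG (sY x)\<^esub>" using rep_one_iff[OF x t] by simp
  thus False using rt t1 by simp
qed

end


context L18
begin

lemma gtgt_rev: "x \<in> gog_car Y \<Longrightarrow> gtgt Y (rY x) = sY x"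
  unfolding gtgt_def using fY by simp

lemma sm_closed: "x \<in> gog_car Y \<Longrightarrow> k \<in> carrier (GG x) \<Longrightarrow> sm x k \<in> carrier (GG (sY x))"
  using fY(7) by (auto simp: hom_def Pi_def)

lemma hrev_closed: "x \<in> gog_car Y \<Longrightarrow> k \<in> carrier (GG x) \<Longrightarrow> gog_hrev Y x k \<in> carrier (GG (rY x))"
  using fY(8) by (auto simp: hom_def Pi_def)

lemma hplus_closed: "x \<in> gog_car Y \<Longrightarrow> k \<in> carrier (GG x) \<Longrightarrow> hplus Y x k \<in> carrier (GG (gtgt Y x))"
  unfolding hplus_def gtgt_def using sm_closed[OF fY(2) hrev_closed] by blast

lemma hplus_Im: "x \<in> gog_car Y \<Longrightarrow> k \<in> carrier (GG x) \<Longrightarrow> hplus Y x k \<in> Im (rY x)"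
  unfolding hplus_def using Im_I[OF fY(2) hrev_closed] by blast

lemma sm_mult: "x \<in> gog_car Y \<Longrightarrow> k \<in> carrier (GG x) \<Longrightarrow> k' \<in> carrier (GG x) \<Longrightarrow>
   sm x (k \<otimes>\<^bsub>GG x\<^esub> k') = sm x k \<otimes>\<^bsub>GG (sY x)\<^esub> sm x k'"
  using hom_mult[OF fY(7)] by blast

lemma sm_one: "x \<in> gog_car Y \<Longrightarrow> sm x \<one>\<^bsub>GG x\<^esub> = \<one>\<^bsub>GG (sY x)\<^esub>"
  using hom_one[OF fY(7) fY(6) grp_src] by blast

lemma hrev_mult: "x \<in> gog_car Y \<Longrightarrow> k \<in> carrier (GG x) \<Longrightarrow> k' \<in> carrier (GG x) \<Longrightarrow>
   gog_hrev Y x (k \<otimes>\<^bsub>GG x\<^esub> k') = gog_hrev Y x k \<otimes>\<^bsub>GG (rY x)\<^esub> gog_hrev Y x k'"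
  using hom_mult[OF fY(8)] by blast

lemma hrev_one: "x \<in> gog_car Y \<Longrightarrow> gog_hrev Y x \<one>\<^bsub>GG x\<^esub> = \<one>\<^bsub>GG (rY x)\<^esub>"
  using hom_one[OF fY(8) fY(6) fY(6)[OF fY(2)]] by blast

lemma hplus_mult: "x \<in> gog_car Y \<Longrightarrow> k \<in> carrier (GG x) \<Longrightarrow> k' \<in> carrier (GG x) \<Longrightarrow>
   hplus Y x (k \<otimes>\<^bsub>GG x\<^esub> k') = hplus Y x k \<otimes>\<^bsub>GG (gtgt Y x)\<^esub> hplus Y x k'"
  unfolding hplus_def gtgt_def
  using hrev_mult sm_mult[OF fY(2) hrev_closed hrev_closed] by simp

lemma hplus_one: "x \<in> gog_car Y \<Longrightarrow> hplus Y x \<one>\<^bsub>GG x\<^esub> = \<one>\<^bsub>GG (gtgt Y x)\<^esub>"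
  unfolding hplus_def gtgt_def using hrev_one sm_one[OF fY(2)] by simp

lemma hplus_rev: "x \<in> gog_car Y \<Longrightarrow> g \<in> carrier (GG x) \<Longrightarrow> hplus Y (rY x) (gog_hrev Y x g) = sm x g"
  unfolding hplus_def using fY by simp

lemma vert_Y: "x \<in> gog_car Y \<Longrightarrow> sY x = x \<Longrightarrow> g \<in> carrier (GG x) \<Longrightarrow> sm x g = g \<and> hplus Y x g = g"
  unfolding hplus_def using gog_vert[OF grY] fY by (metis)

section \<open>normal forms\<close>

fun chain :: "'y \<Rightarrow> ('y \<times> 'g) list \<Rightarrow> 'y \<Rightarrow> bool" where
  "chain u [] e = (u = e)"
| "chain u ((x,t)#L) e = (x \<in> gog_car Y \<and> sY x \<noteq> x \<and> sY x = u \<and> t \<in> carrier (GG u) \<and> rep x t = t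
     \<and> chain (gtgt Y x) L e \<and>
     (case L of [] \<Rightarrow> True | (x',t')#_ \<Rightarrow> \<not> (x' = rY x \<and> t' = \<one>\<^bsub>GG (sY x')\<^esub>)))"

definition vnf :: "'y \<Rightarrow> ('y \<times> 'g) list \<times> 'z \<times> 'b \<Rightarrow> bool" where
  "vnf u n = (case n of (L, w, c) \<Rightarrow> w \<in> bverts B \<and> c \<in> gob_set B w \<and> chain u L (gob_lam B w))"

fun actG :: "'g \<Rightarrow> ('y \<times> 'g) list \<times> 'z \<times> 'b \<Rightarrow> ('y \<times> 'g) list \<times> 'z \<times> 'b" where
  "actG h ([], w, c) = ([], w, gob_lact B w h c)"
| "actG h ((x,t)#L, p) = (let a = h \<otimes>\<^bsub>GG (sY x)\<^esub> t; r = actG (hplus Y x (kq x a)) (L, p)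
     in ((x, rep x a) # fst r, snd r))"

definition actE :: "'y \<Rightarrow> ('y \<times> 'g) list \<times> 'z \<times> 'b \<Rightarrow> ('y \<times> 'g) list \<times> 'z \<times> 'b" where
  "actE x n = (if sY x = x then n else
     (case fst n of [] \<Rightarrow> ((x, \<one>\<^bsub>GG (sY x)\<^esub>) # fst n, snd n)
      | (x1,t0)#L' \<Rightarrow> (if x1 = rY x \<and> t0 = \<one>\<^bsub>GG (sY x1)\<^esub> then (L', snd n)
                        else ((x, \<one>\<^bsub>GG (sY x)\<^esub>) # fst n, snd n))))"

lemma bv_facts:
  assumes "w \<in> bverts B"
  shows "gob_lam B w \<in> gverts Y" "gob_rho B w \<in> gverts X" "w \<in> gob_car B" "gob_src B w = w"
    "is_biset (GG (gob_lam B w)) (gog_grp X (gob_rho B w)) (gob_set B w) (gob_lact B w) (gob_ract B w)"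
  using assms gob unfolding graph_of_bisets_def bverts_def verts_def gverts_def graph_morphism_def
  by auto

end


context L18
begin

lemma chain_cons_D:
  assumes "chain u ((x,t)#L) e"
  shows "x \<in> gog_car Y" "sY x \<noteq> x" "sY x = u" "t \<in> carrier (GG u)" "rep x t = t"
    "chain (gtgt Y x) L e"
    "\<And>x' t' L'. L = (x',t')#L' \<Longrightarrow> \<not> (x' = rY x \<and> t' = \<one>\<^bsub>GG (sY x')\<^esub>)"
  using assms by auto

lemma actG_valid:
  assumes "chain u L (gob_lam B w)" "w \<in> bverts B" "c \<in> gob_set B w" "h \<in> carrier (GG u)"
  shows "vnf u (actG h (L,w,c)) \<and> fst (snd (actG h (L,w,c))) = w \<and> map fst (fst (actG h (L,w,c))) = map fst L"
  using assms
proof (induction L arbitrary: u h)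
  case Nil
  then have "u = gob_lam B w" by simp
  then show ?case using Nil bv_facts[OF Nil(2)] unfolding is_biset_def vnf_def by simp
next
  case (Cons xt L)
  obtain x t where xt: "xt = (x,t)" by fastforce
  note ch = chain_cons_D[OF Cons(2)[unfolded xt]]
  let ?G = "GG (sY x)"
  define a where "a = h \<otimes>\<^bsub>?G\<^esub> t"
  have ac: "a \<in> carrier ?G" unfolding a_def using ch Cons(5) grp_src[OF ch(1)] by (simp add: monoid.m_closed group.is_monoid)
  define k where "k = kq x a"
  have kc: "k \<in> carrier (GG x)" using kq_prop[OF ch(1) ac] k_def by simp
  define h' where "h' = hplus Y x k"
  have hc: "h' \<in> carrier (GG (gtgt Y x))" using hplus_closed[OF ch(1) kc] h'_def by simp
  obtain L1 w1 c1 where r: "actG h' (L,w,c) = (L1,w1,c1)" by (metis prod.exhaust)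
  have IH: "vnf (gtgt Y x) (L1,w1,c1) \<and> w1 = w \<and> map fst L1 = map fst L"
    using Cons.IH[OF ch(6) Cons(3) Cons(4) hc] unfolding r by (elim conjE) (simp only: fst_conv snd_conv)
  have eq: "actG h ((x,t)#L, w, c) = ((x, rep x a) # L1, w1, c1)"
    using r by (simp add: Let_def a_def k_def h'_def)
  have red: "case L1 of [] \<Rightarrow> True | (x',t')#_ \<Rightarrow> \<not> (x' = rY x \<and> t' = \<one>\<^bsub>GG (sY x')\<^esub>)"
  proof (cases L)
    case Nil then show ?thesis using IH by simp
  next
    case (Cons yt L'')
    obtain x' t' where yt: "yt = (x',t')" by fastforce
    note ch' = chain_cons_D[OF ch(6)[unfolded Cons yt]]
    have e2: "actG h' ((x',t')#L'', w, c) = ((x', rep x' (h' \<otimes>\<^bsub>GG (sY x')\<^esub> t')) # fst (actG (hplus Y x' (kq x' (h' \<otimes>\<^bsub>GG (sY x')\<^esub> t'))) (L'',w,c)),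
        snd (actG (hplus Y x' (kq x' (h' \<otimes>\<^bsub>GG (sY x')\<^esub> t'))) (L'',w,c)))"
      by (simp add: Let_def)
    have L1: "L1 = (x', rep x' (h' \<otimes>\<^bsub>GG (sY x')\<^esub> t')) # fst (actG (hplus Y x' (kq x' (h' \<otimes>\<^bsub>GG (sY x')\<^esub> t'))) (L'',w,c))"
      using r e2 Cons yt by simp
    have "\<not> (x' = rY x \<and> rep x' (h' \<otimes>\<^bsub>GG (sY x')\<^esub> t') = \<one>\<^bsub>GG (sY x')\<^esub>)"
    proof
      assume as: "x' = rY x \<and> rep x' (h' \<otimes>\<^bsub>GG (sY x')\<^esub> t') = \<one>\<^bsub>GG (sY x')\<^esub>"
      have "t' \<noteq> \<one>\<^bsub>GG (sY x')\<^esub>" using ch(7)[OF Cons[unfolded yt]] as by blast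
      moreover have "h' \<in> Im x'" using hplus_Im[OF ch(1) kc] as h'_def by simp
      moreover have "t' \<in> carrier (GG (sY x'))" using ch' by simp
      ultimately show False using red_keep[OF ch'(1) _ _ ch'(5)] as by blast
    qed
    then show ?thesis using L1 by simp
  qed
  have "rep x a \<in> carrier ?G" "rep x (rep x a) = rep x a"
    using rep_prop[OF ch(1) ac] rep_idem[OF ch(1) ac] by auto
  then show ?case unfolding xt eq using IH red ch unfolding vnf_def by auto
qed

lemma actG_w: "chain u L (gob_lam B w) \<Longrightarrow> w \<in> bverts B \<Longrightarrow> c \<in> gob_set B w \<Longrightarrow> h \<in> carrier (GG u) \<Longrightarrow>
  \<exists>L' c'. actG h (L,w,c) = (L', w, c')"
  using actG_valid by (metis prod.collapse)

end


context L18
begin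

lemma actG_mult:
  assumes "chain u L (gob_lam B w)" "w \<in> bverts B" "c \<in> gob_set B w"
    "h \<in> carrier (GG u)" "h' \<in> carrier (GG u)"
  shows "actG h (actG h' (L,w,c)) = actG (h \<otimes>\<^bsub>GG u\<^esub> h') (L,w,c)"
  using assms
proof (induction L arbitrary: u h h')
  case Nil
  then have "u = gob_lam B w" by simp
  then show ?case using Nil bv_facts[OF Nil(2)] unfolding is_biset_def by simp
next
  case (Cons xt L)
  obtain x t where xt: "xt = (x,t)" by fastforce
  note ch = chain_cons_D[OF Cons(2)[unfolded xt]]
  let ?G = "GG (sY x)"
  interpret H: group ?G using grp_src[OF ch(1)] .
  have u: "u = sY x" using ch by simp
  have hc: "h \<in> carrier ?G" "h' \<in> carrier ?G" "t \<in> carrier ?G" using Cons(5,6) ch(4) u by auto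
  define a1 where "a1 = h' \<otimes>\<^bsub>?G\<^esub> t"
  have a1c: "a1 \<in> carrier ?G" using hc a1_def by simp
  define t1 where "t1 = rep x a1"
  define k1 where "k1 = kq x a1"
  have t1c: "t1 \<in> carrier ?G" and k1c: "k1 \<in> carrier (GG x)" and a1e: "a1 = t1 \<otimes>\<^bsub>?G\<^esub> sm x k1"
    using rep_prop[OF ch(1) a1c] kq_prop[OF ch(1) a1c] t1_def k1_def by auto
  define a2 where "a2 = h \<otimes>\<^bsub>?G\<^esub> t1"
  have a2c: "a2 \<in> carrier ?G" using hc t1c a2_def by simp
  define t2 where "t2 = rep x a2"
  define k2 where "k2 = kq x a2"
  have t2c: "t2 \<in> carrier ?G" and k2c: "k2 \<in> carrier (GG x)" and a2e: "a2 = t2 \<otimes>\<^bsub>?G\<^esub> sm x k2"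
    using rep_prop[OF ch(1) a2c] kq_prop[OF ch(1) a2c] t2_def k2_def by auto
  have t2r: "rep x t2 = t2" using rep_idem[OF ch(1) a2c] t2_def by simp
  have smc: "sm x k1 \<in> carrier ?G" "sm x k2 \<in> carrier ?G" using sm_closed[OF ch(1)] k1c k2c by auto
  have prod: "(h \<otimes>\<^bsub>?G\<^esub> h') \<otimes>\<^bsub>?G\<^esub> t = t2 \<otimes>\<^bsub>?G\<^esub> sm x (k2 \<otimes>\<^bsub>GG x\<^esub> k1)"
  proof -
    have "(h \<otimes>\<^bsub>?G\<^esub> h') \<otimes>\<^bsub>?G\<^esub> t = h \<otimes>\<^bsub>?G\<^esub> a1" using hc a1_def H.m_assoc by simp
    also have "\<dots> = a2 \<otimes>\<^bsub>?G\<^esub> sm x k1" using a1e a2_def hc t1c smc H.m_assoc by simp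
    also have "\<dots> = t2 \<otimes>\<^bsub>?G\<^esub> (sm x k2 \<otimes>\<^bsub>?G\<^esub> sm x k1)" using a2e t2c smc H.m_assoc by simp
    also have "\<dots> = t2 \<otimes>\<^bsub>?G\<^esub> sm x (k2 \<otimes>\<^bsub>GG x\<^esub> k1)" using sm_mult[OF ch(1) k2c k1c] by simp
    finally show ?thesis .
  qed
  have kk: "k2 \<otimes>\<^bsub>GG x\<^esub> k1 \<in> carrier (GG x)"
    by (rule monoid.m_closed[OF group.is_monoid[OF fY(6)[OF ch(1)]] k2c k1c])
  have rp: "rep x ((h \<otimes>\<^bsub>?G\<^esub> h') \<otimes>\<^bsub>?G\<^esub> t) = t2" and kp: "kq x ((h \<otimes>\<^bsub>?G\<^esub> h') \<otimes>\<^bsub>?G\<^esub> t) = k2 \<otimes>\<^bsub>GG x\<^esub> k1"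
    unfolding prod by (rule fixed(1)[OF ch(1) t2c t2r kk], rule fixed(2)[OF ch(1) t2c t2r kk])
  have hp1: "hplus Y x k1 \<in> carrier (GG (gtgt Y x))" "hplus Y x k2 \<in> carrier (GG (gtgt Y x))"
    using hplus_closed[OF ch(1)] k1c k2c by auto
  define r1 where "r1 = actG (hplus Y x k1) (L,w,c)"
  have e1: "actG h' ((x,t)#L, w, c) = ((x,t1) # fst r1, snd r1)"
    unfolding a1_def t1_def k1_def r1_def by (simp only: actG.simps Let_def)
  have e2: "actG h ((x,t1) # fst r1, snd r1) = ((x,t2) # fst (actG (hplus Y x k2) r1), snd (actG (hplus Y x k2) r1))"
    unfolding a2_def t2_def k2_def by (simp only: actG.simps Let_def prod.collapse)
  have IH: "actG (hplus Y x k2) r1 = actG (hplus Y x (k2 \<otimes>\<^bsub>GG x\<^esub> k1)) (L,w,c)"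
    unfolding r1_def using Cons.IH[OF ch(6) Cons(3) Cons(4) hp1(2) hp1(1)] hplus_mult[OF ch(1) k2c k1c] by simp
  have e3: "actG (h \<otimes>\<^bsub>GG u\<^esub> h') ((x,t)#L, w, c) =
     ((x,t2) # fst (actG (hplus Y x (k2 \<otimes>\<^bsub>GG x\<^esub> k1)) (L,w,c)), snd (actG (hplus Y x (k2 \<otimes>\<^bsub>GG x\<^esub> k1)) (L,w,c)))"
    unfolding u rp[symmetric] kp[symmetric] by (simp only: actG.simps Let_def)
  show ?case unfolding xt e1 e2 e3 IH ..
qed

lemma actG_one:
  assumes "chain u L (gob_lam B w)" "w \<in> bverts B" "c \<in> gob_set B w"
  shows "actG \<one>\<^bsub>GG u\<^esub> (L,w,c) = (L,w,c)"
  using assms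
proof (induction L arbitrary: u)
  case Nil
  then have "u = gob_lam B w" by simp
  then show ?case using Nil bv_facts[OF Nil(2)] unfolding is_biset_def by simp
next
  case (Cons xt L)
  obtain x t where xt: "xt = (x,t)" by fastforce
  note ch = chain_cons_D[OF Cons(2)[unfolded xt]]
  let ?G = "GG (sY x)"
  interpret H: group ?G using grp_src[OF ch(1)] .
  have u: "u = sY x" using ch by simp
  have tc: "t \<in> carrier ?G" using ch(4) u by simp
  have one1: "\<one>\<^bsub>GG x\<^esub> \<in> carrier (GG x)" using fY(6)[OF ch(1)] group.is_monoid monoid.one_closed by blast
  have "\<one>\<^bsub>?G\<^esub> \<otimes>\<^bsub>?G\<^esub> t = t \<otimes>\<^bsub>?G\<^esub> sm x \<one>\<^bsub>GG x\<^esub>" using sm_one[OF ch(1)] tc by simp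
  then have rp: "rep x (\<one>\<^bsub>?G\<^esub> \<otimes>\<^bsub>?G\<^esub> t) = t" and kp: "kq x (\<one>\<^bsub>?G\<^esub> \<otimes>\<^bsub>?G\<^esub> t) = \<one>\<^bsub>GG x\<^esub>"
    using fixed[OF ch(1) tc ch(5) one1] by auto
  have IH: "actG \<one>\<^bsub>GG (gtgt Y x)\<^esub> (L,w,c) = (L,w,c)" using Cons.IH[OF ch(6) Cons(3) Cons(4)] .
  have e: "actG \<one>\<^bsub>GG u\<^esub> ((x,t)#L, w, c) = ((x, rep x (\<one>\<^bsub>?G\<^esub> \<otimes>\<^bsub>?G\<^esub> t)) #
      fst (actG (hplus Y x (kq x (\<one>\<^bsub>?G\<^esub> \<otimes>\<^bsub>?G\<^esub> t))) (L,w,c)),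
      snd (actG (hplus Y x (kq x (\<one>\<^bsub>?G\<^esub> \<otimes>\<^bsub>?G\<^esub> t))) (L,w,c)))"
    unfolding u by (simp only: actG.simps Let_def)
  show ?case unfolding xt e rp kp hplus_one[OF ch(1)] IH by simp
qed

end


context L18
begin

lemma actE_vert: "sY x = x \<Longrightarrow> actE x n = n"
  unfolding actE_def by simp

lemma actE_nil: "sY x \<noteq> x \<Longrightarrow> actE x ([], p) = ([(x, \<one>\<^bsub>GG (sY x)\<^esub>)], p)"
  unfolding actE_def by simp

lemma actE_cons: "sY x \<noteq> x \<Longrightarrow> actE x ((x1,t0)#L, p) =
  (if x1 = rY x \<and> t0 = \<one>\<^bsub>GG (sY x1)\<^esub> then (L, p) else ((x, \<one>\<^bsub>GG (sY x)\<^esub>) # (x1,t0) # L, p))"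
  unfolding actE_def by simp

lemma rep_one: "x \<in> gog_car Y \<Longrightarrow> rep x \<one>\<^bsub>GG (sY x)\<^esub> = \<one>\<^bsub>GG (sY x)\<^esub>"
  unfolding rep_def using subgroup.one_closed[OF Im_sub] by simp

lemma one_sm:
  assumes x: "x \<in> gog_car Y" and k: "k \<in> carrier (GG x)"
  shows "rep x (\<one>\<^bsub>GG (sY x)\<^esub> \<otimes>\<^bsub>GG (sY x)\<^esub> sm x k) = \<one>\<^bsub>GG (sY x)\<^esub>"
    "kq x (\<one>\<^bsub>GG (sY x)\<^esub> \<otimes>\<^bsub>GG (sY x)\<^esub> sm x k) = k"
  using fixed[OF x _ rep_one[OF x] k] group.is_monoid[OF grp_src[OF x]] monoid.one_closed by blast+

lemma rY_edge: "x \<in> gog_car Y \<Longrightarrow> sY x \<noteq> x \<Longrightarrow> sY (rY x) \<noteq> rY x"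
  using fY by metis

lemma gtgt_vert: "x \<in> gog_car Y \<Longrightarrow> sY x = x \<Longrightarrow> gtgt Y x = x"
  unfolding gtgt_def using fY by metis

lemma actE_valid:
  assumes x: "x \<in> gog_car Y" and v: "vnf (gtgt Y x) (L,w,c)"
  shows "vnf (sY x) (actE x (L,w,c))"
proof (cases "sY x = x")
  case True
  then show ?thesis using v actE_vert[OF True] gtgt_vert[OF x True] by simp
next
  case False
  have v': "w \<in> bverts B" "c \<in> gob_set B w" "chain (gtgt Y x) L (gob_lam B w)" using v unfolding vnf_def by auto
  have one: "\<one>\<^bsub>GG (sY x)\<^esub> \<in> carrier (GG (sY x))"
    using group.is_monoid[OF grp_src[OF x]] monoid.one_closed by blast
  show ?thesis
  proof (cases L)
    case Nil
    then show ?thesis using v' actE_nil[OF False] x False one rep_one[OF x] unfolding vnf_def by simp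
  next
    case (Cons yt L')
    obtain x1 t0 where yt: "yt = (x1,t0)" by fastforce
    note ch = chain_cons_D[OF v'(3)[unfolded Cons yt]]
    show ?thesis
    proof (cases "x1 = rY x \<and> t0 = \<one>\<^bsub>GG (sY x1)\<^esub>")
      case True
      then have "gtgt Y x1 = sY x" using gtgt_rev[OF x] by simp
      then show ?thesis using actE_cons[OF False, of x1 t0 L'] True ch(6) v' unfolding Cons yt vnf_def by simp
    next
      case F2: False
      have e: "actE x (L,w,c) = ((x, \<one>\<^bsub>GG (sY x)\<^esub>) # (x1,t0) # L', w, c)"
        using actE_cons[OF False, of x1 t0 L'] F2 unfolding Cons yt by simp
      have g1: "sY (rY x) = gtgt Y x" unfolding gtgt_def ..
      have g2: "gtgt Y x \<noteq> x1"
      proof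
        assume "gtgt Y x = x1"
        then have "sY x1 = sY (sY (rY x))" using ch(3) unfolding gtgt_def by simp
        also have "\<dots> = sY (rY x)" using fY(3)[OF fY(2)[OF x]] .
        finally show False using ch(2) ch(3) \<open>gtgt Y x = x1\<close> unfolding gtgt_def by simp
      qed
      have "chain (sY x) ((x, \<one>\<^bsub>GG (sY x)\<^esub>) # (x1,t0) # L') (gob_lam B w)"
        using x False one rep_one[OF x] v'(3) F2 g1 g2 unfolding Cons yt by simp
      then show ?thesis unfolding e vnf_def using v' g2 by simp
    qed
  qed
qed

lemma actE_inv:
  assumes x: "x \<in> gog_car Y" and v: "vnf (sY x) (L,w,c)"
  shows "actE x (actE (rY x) (L,w,c)) = (L,w,c)"
proof (cases "sY x = x")
  case True
  then have "rY x = x" using fY(5)[OF x] by metis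
  then show ?thesis using actE_vert True by simp
next
  case False
  have rx: "rY x \<in> gog_car Y" "sY (rY x) \<noteq> rY x" "rY (rY x) = x" using fY[OF x] rY_edge[OF x False] by auto
  have v': "chain (sY x) L (gob_lam B w)" using v unfolding vnf_def by auto
  show ?thesis
  proof (cases L)
    case Nil
    then show ?thesis using actE_nil[OF rx(2)] actE_cons[OF False] by simp
  next
    case (Cons yt L')
    obtain x1 t0 where yt: "yt = (x1,t0)" by fastforce
    note ch = chain_cons_D[OF v'[unfolded Cons yt]]
    show ?thesis
    proof (cases "x1 = x \<and> t0 = \<one>\<^bsub>GG (sY x1)\<^esub>")
      case True
      have e1: "actE (rY x) (L,w,c) = (L', w, c)"
        using actE_cons[OF rx(2), of x1 t0 L'] True rx(3) unfolding Cons yt by simp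
      show ?thesis
      proof (cases L')
        case Nil
        then show ?thesis using e1 actE_nil[OF False] True unfolding Cons yt by simp
      next
        case (Cons zt L'')
        obtain x2 t1 where zt: "zt = (x2,t1)" by fastforce
        have "\<not> (x2 = rY x \<and> t1 = \<one>\<^bsub>GG (sY x2)\<^esub>)" using ch(7)[OF Cons[unfolded zt]] True by simp
        then show ?thesis using e1 actE_cons[OF False, of x2 t1 L''] True unfolding Cons zt \<open>L = yt # L'\<close> yt by simp
      qed
    next
      case F2: False
      have e1: "actE (rY x) (L,w,c) = ((rY x, \<one>\<^bsub>GG (sY (rY x))\<^esub>) # L, w, c)"
        using actE_cons[OF rx(2), of x1 t0 L'] F2 rx(3) unfolding Cons yt by auto
      show ?thesis unfolding e1 using actE_cons[OF False, of "rY x" "\<one>\<^bsub>GG (sY (rY x))\<^esub>" L] by simp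
    qed
  qed
qed

end


context L18
begin

lemma actG_head:
  assumes x: "x \<in> gog_car Y" and g: "g \<in> carrier (GG x)"
  shows "actG (sm x g) ((x, \<one>\<^bsub>GG (sY x)\<^esub>)#L, p) =
    ((x, \<one>\<^bsub>GG (sY x)\<^esub>) # fst (actG (hplus Y x g) (L,p)), snd (actG (hplus Y x g) (L,p)))"
proof -
  interpret H: group "GG (sY x)" using grp_src[OF x] .
  have smc: "sm x g \<in> carrier (GG (sY x))" using sm_closed[OF x g] .
  have hm: "sm x g \<otimes>\<^bsub>GG (sY x)\<^esub> \<one>\<^bsub>GG (sY x)\<^esub> = \<one>\<^bsub>GG (sY x)\<^esub> \<otimes>\<^bsub>GG (sY x)\<^esub> sm x g"
    using smc by simp
  have "actG (sm x g) ((x, \<one>\<^bsub>GG (sY x)\<^esub>)#L, p) =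
     (let a = sm x g \<otimes>\<^bsub>GG (sY x)\<^esub> \<one>\<^bsub>GG (sY x)\<^esub>; r = actG (hplus Y x (kq x a)) (L, p)
     in ((x, rep x a) # fst r, snd r))" by (simp only: actG.simps)
  also have "\<dots> = ((x, \<one>\<^bsub>GG (sY x)\<^esub>) # fst (actG (hplus Y x g) (L,p)), snd (actG (hplus Y x g) (L,p)))"
    by (simp only: Let_def hm one_sm[OF x g])
  finally show ?thesis .
qed

lemma actE_conj:
  assumes x: "x \<in> gog_car Y" and g: "g \<in> carrier (GG x)" and v: "vnf (gtgt Y x) (L,w,c)"
  shows "actG (sm x g) (actE x (L,w,c)) = actE x (actG (hplus Y x g) (L,w,c))"
proof (cases "sY x = x")
  case True
  then show ?thesis using actE_vert[OF True] vert_Y[OF x True g] by simp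
next
  case False
  have v': "chain (gtgt Y x) L (gob_lam B w)" using v unfolding vnf_def by auto
  show ?thesis
  proof (cases L)
    case Nil
    show ?thesis unfolding Nil actE_nil[OF False] actG_head[OF x g] using actE_nil[OF False] by simp
  next
    case (Cons yt L')
    obtain x1 t0 where yt: "yt = (x1,t0)" by fastforce
    note ch = chain_cons_D[OF v'[unfolded Cons yt]]
    show ?thesis
    proof (cases "x1 = rY x \<and> t0 = \<one>\<^bsub>GG (sY x1)\<^esub>")
      case True
      have e1: "actE x (L,w,c) = (L', w, c)"
        using actE_cons[OF False, of x1 t0 L'] True unfolding Cons yt by simp
      have rx: "rY x \<in> gog_car Y" using fY(2)[OF x] .
      have hr: "gog_hrev Y x g \<in> carrier (GG (rY x))" using hrev_closed[OF x g] .
      interpret H: group "GG (sY x1)" using grp_src[OF ch(1)] .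
      have x1e: "x1 = rY x" using True by simp
      have smc: "sm x1 (gog_hrev Y x g) \<in> carrier (GG (sY x1))" using sm_closed[OF rx hr, folded x1e] .
      have hm: "hplus Y x g \<otimes>\<^bsub>GG (sY x1)\<^esub> t0 = \<one>\<^bsub>GG (sY x1)\<^esub> \<otimes>\<^bsub>GG (sY x1)\<^esub> sm x1 (gog_hrev Y x g)"
      proof -
        have hp: "hplus Y x g = sm x1 (gog_hrev Y x g)" using True unfolding hplus_def by simp
        have t0e: "t0 = \<one>\<^bsub>GG (sY x1)\<^esub>" using True by simp
        have "sm x1 (gog_hrev Y x g) \<otimes>\<^bsub>GG (sY x1)\<^esub> \<one>\<^bsub>GG (sY x1)\<^esub> = \<one>\<^bsub>GG (sY x1)\<^esub> \<otimes>\<^bsub>GG (sY x1)\<^esub> sm x1 (gog_hrev Y x g)"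
          using smc by simp
        then show ?thesis unfolding hp t0e .
      qed
      have rk: "rep x1 (hplus Y x g \<otimes>\<^bsub>GG (sY x1)\<^esub> t0) = \<one>\<^bsub>GG (sY x1)\<^esub>"
        "kq x1 (hplus Y x g \<otimes>\<^bsub>GG (sY x1)\<^esub> t0) = gog_hrev Y x g"
        unfolding hm using one_sm[OF rx hr, folded x1e] by auto
      have hpr: "hplus Y x1 (gog_hrev Y x g) = sm x g" using hplus_rev[OF x g, folded x1e] .
      have e2: "actG (hplus Y x g) ((x1,t0)#L', w, c) =
         ((x1, \<one>\<^bsub>GG (sY x1)\<^esub>) # fst (actG (sm x g) (L', w, c)), snd (actG (sm x g) (L', w, c)))"
        by (simp only: actG.simps Let_def rk hpr)
      have e3: "actE x ((x1, \<one>\<^bsub>GG (sY x1)\<^esub>) # fst (actG (sm x g) (L', w, c)), snd (actG (sm x g) (L', w, c)))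
         = (fst (actG (sm x g) (L', w, c)), snd (actG (sm x g) (L', w, c)))"
        using actE_cons[OF False, of x1 "\<one>\<^bsub>GG (sY x1)\<^esub>" "fst (actG (sm x g) (L', w, c))" "snd (actG (sm x g) (L', w, c))"] x1e
        by (simp only: if_True simp_thms)
      show ?thesis unfolding e1 unfolding Cons yt e2 e3 by simp
    next
      case F2: False
      have e1: "actE x (L,w,c) = ((x, \<one>\<^bsub>GG (sY x)\<^esub>) # L, w, c)"
        using actE_cons[OF False, of x1 t0 L'] F2 unfolding Cons yt by simp
      define t0' where "t0' = rep x1 (hplus Y x g \<otimes>\<^bsub>GG (sY x1)\<^esub> t0)"
      define R1 where "R1 = actG (hplus Y x1 (kq x1 (hplus Y x g \<otimes>\<^bsub>GG (sY x1)\<^esub> t0))) (L', w, c)"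
      have e2: "actG (hplus Y x g) ((x1,t0)#L', w, c) = ((x1, t0') # fst R1, snd R1)"
        unfolding t0'_def R1_def by (simp only: actG.simps Let_def)
      have nr: "\<not> (x1 = rY x \<and> t0' = \<one>\<^bsub>GG (sY x1)\<^esub>)"
      proof
        assume as: "x1 = rY x \<and> t0' = \<one>\<^bsub>GG (sY x1)\<^esub>"
        then have tne: "t0 \<noteq> \<one>\<^bsub>GG (sY x1)\<^esub>" using F2 by blast
        have x1e: "x1 = rY x" using as by simp
        have hI: "hplus Y x g \<in> Im x1" using hplus_Im[OF x g, folded x1e] .
        have tc: "t0 \<in> carrier (GG (sY x1))" unfolding ch(3) by (rule ch(4))
        have "rep x1 (hplus Y x g \<otimes>\<^bsub>GG (sY x1)\<^esub> t0) \<noteq> \<one>\<^bsub>GG (sY x1)\<^esub>"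
          by (rule red_keep[OF ch(1) hI tc ch(5) tne])
        then show False using as unfolding t0'_def by blast
      qed
      have e3: "actE x ((x1, t0') # fst R1, snd R1) = ((x, \<one>\<^bsub>GG (sY x)\<^esub>) # (x1, t0') # fst R1, snd R1)"
        using actE_cons[OF False, of x1 t0' "fst R1" "snd R1"] by (simp only: nr if_False)
      show ?thesis unfolding e1 actG_head[OF x g] unfolding Cons yt e2 e3 by (simp only: fst_conv snd_conv)
    qed
  qed
qed

end


lemma valid_word_vert:
  assumes "graph_of_groups \<Gamma>" "valid_word \<Gamma> ws v w"
  shows "v \<in> gverts \<Gamma>"
  using assms(2)
proof (cases ws)
  case (Cons a ws')
  then show ?thesis using assms
    by (cases a) (auto simp: gverts_def verts_def dest: gog_facts(1,3)[OF assms(1)])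
qed (auto)

lemma valid_word_end:
  assumes "graph_of_groups \<Gamma>" "valid_word \<Gamma> ws v w"
  shows "w \<in> gverts \<Gamma>"
  using assms(2)
proof (induction ws arbitrary: v)
  case Nil then show ?case by auto
next
  case (Cons a ws) then show ?case by (cases a) auto
qed

lemma valid_word_append:
  assumes "graph_of_groups \<Gamma>"
  shows "valid_word \<Gamma> (a @ b) v w \<longleftrightarrow> (\<exists>m. valid_word \<Gamma> a v m \<and> valid_word \<Gamma> b m w)"
proof (induction a arbitrary: v)
  case Nil
  show ?case using valid_word_vert[OF assms] by auto
next
  case (Cons l a)
  then show ?case by (cases l) auto
qed

lemma valid_word_end_det:
  "valid_word \<Gamma> ws v w \<Longrightarrow> valid_word \<Gamma> ws v w' \<Longrightarrow> w = w'"
proof (induction ws arbitrary: v)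
  case Nil then show ?case by simp
next
  case (Cons a ws) then show ?case by (cases a) auto
qed

lemma valid_word_start_det:
  "valid_word \<Gamma> ws v w \<Longrightarrow> valid_word \<Gamma> ws v' w \<Longrightarrow> v = v'"
  by (cases ws) (auto, (case_tac a, auto)+)

context L18
begin

fun actLt :: "('y,'g) letter \<Rightarrow> ('y \<times> 'g) list \<times> 'z \<times> 'b \<Rightarrow> ('y \<times> 'g) list \<times> 'z \<times> 'b" where
  "actLt (Gen x) n = actE x n"
| "actLt (Elt u h) n = actG h n"

lemma vnf_actG: "vnf u n \<Longrightarrow> h \<in> carrier (GG u) \<Longrightarrow> vnf u (actG h n)"
  using actG_valid unfolding vnf_def by (cases n) auto

lemma vnf_actE: "x \<in> gog_car Y \<Longrightarrow> vnf (gtgt Y x) n \<Longrightarrow> vnf (sY x) (actE x n)"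
  using actE_valid by (cases n) auto

lemma fold_valid: "valid_word Y q d e \<Longrightarrow> vnf e n \<Longrightarrow> vnf d (foldr actLt q n)"
proof (induction q arbitrary: d)
  case Nil then show ?case by simp
next
  case (Cons a q)
  show ?case
  proof (cases a)
    case (Gen x)
    then show ?thesis using Cons vnf_actE[of x "foldr actLt q n"] by auto
  next
    case (Elt u h)
    then show ?thesis using Cons vnf_actG[of u "foldr actLt q n" h] by auto
  qed
qed

lemma basic_Y:
  assumes "(l, r) \<in> basic_rel Y" "valid_word Y l m m'" "valid_word Y r m m'" "vnf m' N"
  shows "foldr actLt l N = foldr actLt r N"
  using assms
proof (cases rule: basic_rel.cases)
  case (mult v g h)
  obtain L w c where N: "N = (L,w,c)" by (metis prod.exhaust)
  have "m' = v" using assms(2) mult by auto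
  then show ?thesis using mult actG_mult[of v L w c g h] assms(4) unfolding N vnf_def by simp
next
  case (one v)
  obtain L w c where N: "N = (L,w,c)" by (metis prod.exhaust)
  have "m' = v" using assms(2) one by auto
  then show ?thesis using one actG_one[of v L w c] assms(4) unfolding N vnf_def by simp
next
  case (vert v)
  then show ?thesis using actE_vert[of v] by (simp add: gverts_def verts_def)
next
  case (inv x)
  obtain L w c where N: "N = (L,w,c)" by (metis prod.exhaust)
  have "m' = sY x" using assms(2) inv gtgt_rev[OF inv(3)] by auto
  then show ?thesis using inv actE_inv[of x L w c] assms(4) unfolding N by simp
next
  case (conj x g)
  obtain L w c where N: "N = (L,w,c)" by (metis prod.exhaust)
  have "m' = gtgt Y x" using assms(2) conj by simp
  then show ?thesis using conj actE_conj[of x g L w c] assms(4) unfolding N by simp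
qed

lemma step_Y:
  assumes "(q, q') \<in> word_step Y" "valid_word Y q d e" "valid_word Y q' d e" "vnf e N"
  shows "foldr actLt q N = foldr actLt q' N"
proof -
  obtain u l r t where q: "q = u @ l @ t" "q' = u @ r @ t" "(l,r) \<in> basic_rel Y"
    using assms(1) unfolding word_step_def by blast
  obtain m1 m2 where v1: "valid_word Y u d m1" "valid_word Y l m1 m2" "valid_word Y t m2 e"
    using assms(2) q valid_word_append[OF grY] by metis
  obtain m1' m2' where v2: "valid_word Y u d m1'" "valid_word Y r m1' m2'" "valid_word Y t m2' e"
    using assms(3) q valid_word_append[OF grY] by metis
  have "m1 = m1'" using valid_word_end_det v1(1) v2(1) by metis
  moreover have "m2 = m2'" using valid_word_start_det v1(3) v2(3) by metis
  ultimately have v3: "valid_word Y r m1 m2" using v2 by simp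
  have "vnf m2 (foldr actLt t N)" using fold_valid[OF v1(3) assms(4)] .
  then have "foldr actLt l (foldr actLt t N) = foldr actLt r (foldr actLt t N)"
    using basic_Y[OF q(3) v1(2) v3] by blast
  then show ?thesis unfolding q by simp
qed

end


lemma eqc_sub: "eqc A r \<subseteq> A \<times> A"
proof -
  have "((r \<inter> A \<times> A) \<union> (r \<inter> A \<times> A)\<inverse>)\<^sup>+ \<subseteq> A \<times> A"
    by (rule trancl_subset_Sigma) auto
  then show ?thesis unfolding eqc_def by auto
qed

lemma eqc_sym: "sym (eqc A r)"
proof -
  let ?s = "(r \<inter> A \<times> A) \<union> (r \<inter> A \<times> A)\<inverse>"
  have "sym ?s" by (auto simp: sym_def)
  then have "sym (?s\<^sup>+)" by (rule sym_trancl)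
  moreover have "sym (Id_on A)" by (auto simp: sym_def)
  ultimately show ?thesis unfolding eqc_def by (auto simp: sym_def)
qed

lemma eqc_trans: "trans (eqc A r)"
  unfolding eqc_def trans_def
  by (smt (verit, best) Id_onE Un_iff pair_in_Id_conv trancl_trans)

lemma equiv_eqc: "equiv A (eqc A r)"
  unfolding equiv_def refl_on_def
  using eqc_sub[of A r] eqc_sym eqc_trans unfolding eqc_def by blast

lemma eqc_base: "a \<in> A \<Longrightarrow> b \<in> A \<Longrightarrow> (a,b) \<in> r \<Longrightarrow> (a,b) \<in> eqc A r"
  unfolding eqc_def by blast

lemma eqc_refl: "a \<in> A \<Longrightarrow> (a,a) \<in> eqc A r"
  unfolding eqc_def by blast

lemma eqc_inv:
  assumes F: "\<And>a b. (a,b) \<in> r \<Longrightarrow> a \<in> A \<Longrightarrow> b \<in> A \<Longrightarrow> F a = F b"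
    and ab: "(a,b) \<in> eqc A r"
  shows "F a = F b"
proof -
  let ?s = "(r \<inter> A \<times> A) \<union> (r \<inter> A \<times> A)\<inverse>"
  have "(a,b) \<in> ?s\<^sup>+ \<Longrightarrow> F a = F b"
  proof (induction rule: trancl_induct)
    case (base y) then show ?case using F by auto
  next
    case (step y z) then show ?case using F by auto
  qed
  then show ?thesis using ab unfolding eqc_def by auto
qed

context L18
begin

lemma gob_parts:
  "is_graph (gob_car B) (gob_src B) (gob_rev B)"
  "graph_morphism (gob_car B) (gob_src B) (gob_rev B) (gog_car Y) (gog_src Y) (gog_rev Y) (gob_lam B)"
  "graph_morphism (gob_car B) (gob_src B) (gob_rev B) (gog_car X) (gog_src X) (gog_rev X) (gob_rho B)"
  using gob unfolding graph_of_bisets_def by blast+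

lemma bz:
  assumes "z \<in> gob_car B"
  shows "gob_src B z \<in> gob_car B" "gob_rev B z \<in> gob_car B"
    "gob_src B (gob_src B z) = gob_src B z" "gob_rev B (gob_rev B z) = z"
    "(z = gob_src B z) = (z = gob_rev B z)"
    "gob_lam B z \<in> gog_car Y" "gob_lam B (gob_src B z) = sY (gob_lam B z)"
    "gob_lam B (gob_rev B z) = rY (gob_lam B z)"
    "gob_rho B z \<in> gog_car X" "gob_rho B (gob_src B z) = gog_src X (gob_rho B z)"
    "gob_rho B (gob_rev B z) = gog_rev X (gob_rho B z)"
  using assms gob_parts unfolding is_graph_def graph_morphism_def by blast+

lemma bz_biset:
  assumes "z \<in> gob_car B"
  shows "is_biset (GG (gob_lam B z)) (gog_grp X (gob_rho B z)) (gob_set B z) (gob_lact B z) (gob_ract B z)"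
  using assms gob unfolding graph_of_bisets_def by blast

lemma gob_zall: "\<forall>z\<in>gob_car B.
        (\<forall>b\<in>gob_set B z.
           gob_csrc B z b \<in> gob_set B (gob_src B z) \<and>
           gob_crev B z b \<in> gob_set B (gob_rev B z) \<and>
           gob_crev B (gob_rev B z) (gob_crev B z b) = b) \<and>
        (\<forall>g\<in>carrier (gog_grp Y (gob_lam B z)). \<forall>b\<in>gob_set B z.
           gob_csrc B z (gob_lact B z g b)
             = gob_lact B (gob_src B z) (gog_hsrc Y (gob_lam B z) g) (gob_csrc B z b) \<and>
           gob_crev B z (gob_lact B z g b)
             = gob_lact B (gob_rev B z) (gog_hrev Y (gob_lam B z) g) (gob_crev B z b)) \<and>
        (\<forall>h\<in>carrier (gog_grp X (gob_rho B z)). \<forall>b\<in>gob_set B z.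
           gob_csrc B z (gob_ract B z b h)
             = gob_ract B (gob_src B z) (gob_csrc B z b) (gog_hsrc X (gob_rho B z) h) \<and>
           gob_crev B z (gob_ract B z b h)
             = gob_ract B (gob_rev B z) (gob_crev B z b) (gog_hrev X (gob_rho B z) h))"
  using gob unfolding graph_of_bisets_def by blast

lemma bb:
  assumes "z \<in> gob_car B" "b \<in> gob_set B z"
  shows "gob_csrc B z b \<in> gob_set B (gob_src B z)" "gob_crev B z b \<in> gob_set B (gob_rev B z)"
    "gob_crev B (gob_rev B z) (gob_crev B z b) = b"
  using bspec[OF gob_zall assms(1)] assms(2) by blast+

lemma blact:
  assumes "z \<in> gob_car B" "g \<in> carrier (GG (gob_lam B z))" "b \<in> gob_set B z"
  shows "gob_csrc B z (gob_lact B z g b) = gob_lact B (gob_src B z) (sm (gob_lam B z) g) (gob_csrc B z b)"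
    "gob_crev B z (gob_lact B z g b) = gob_lact B (gob_rev B z) (gog_hrev Y (gob_lam B z) g) (gob_crev B z b)"
  using bspec[OF gob_zall assms(1)] assms(2,3) by blast+

lemma bract:
  assumes "z \<in> gob_car B" "h \<in> carrier (gog_grp X (gob_rho B z))" "b \<in> gob_set B z"
  shows "gob_csrc B z (gob_ract B z b h) = gob_ract B (gob_src B z) (gob_csrc B z b) (gog_hsrc X (gob_rho B z) h)"
    "gob_crev B z (gob_ract B z b h) = gob_ract B (gob_rev B z) (gob_crev B z b) (gog_hrev X (gob_rho B z) h)"
  using bspec[OF gob_zall assms(1)] assms(2,3) by blast+

lemma gob_vall: "\<forall>v\<in>bverts B. \<forall>b\<in>gob_set B v. gob_csrc B v b = b \<and> gob_crev B v b = b"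
  using gob unfolding graph_of_bisets_def by blast

lemma bvert:
  assumes "v \<in> bverts B" "b \<in> gob_set B v"
  shows "gob_csrc B v b = b" "gob_crev B v b = b"
  using gob_vall assms by blast+

lemma bedge_D: "e \<in> bedges B \<Longrightarrow> e \<in> gob_car B \<and> gob_src B e \<noteq> e"
  unfolding bedges_def edges_def by auto

lemma btgt_vert: "e \<in> gob_car B \<Longrightarrow> btgt B e \<in> bverts B"
  unfolding btgt_def bverts_def verts_def using bz(1)[OF bz(2)] bz(3)[OF bz(2)] by simp

lemma src_vert: "e \<in> gob_car B \<Longrightarrow> gob_src B e \<in> bverts B"
  unfolding bverts_def verts_def using bz(1) bz(3) by simp

lemma rev_edge: assumes "e \<in> bedges B" shows "gob_rev B e \<in> bedges B"
proof -
  have e: "e \<in> gob_car B" "gob_src B e \<noteq> e" using assms unfolding bedges_def edges_def by auto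
  have r: "gob_rev B e \<in> gob_car B" using bz(2)[OF e(1)] .
  have "gob_src B (gob_rev B e) \<noteq> gob_rev B e"
  proof
    assume "gob_src B (gob_rev B e) = gob_rev B e"
    then have "gob_rev B e = gob_rev B (gob_rev B e)" using bz(5)[OF r] by simp
    then have "gob_rev B e = e" using bz(4)[OF e(1)] by simp
    then show False using bz(5)[OF e(1)] e(2) by simp
  qed
  then show ?thesis using r unfolding bedges_def edges_def by simp
qed

lemma bplus_mem: "e \<in> gob_car B \<Longrightarrow> b \<in> gob_set B e \<Longrightarrow> bplus B e b \<in> gob_set B (btgt B e)"
  unfolding bplus_def btgt_def by (rule bb(1)[OF bz(2) bb(2)])

lemma bplus_lact:
  assumes e: "e \<in> gob_car B" and k: "k \<in> carrier (GG (gob_lam B e))" and b: "b \<in> gob_set B e"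
  shows "bplus B e (gob_lact B e k b) = gob_lact B (btgt B e) (hplus Y (gob_lam B e) k) (bplus B e b)"
proof -
  have re: "gob_rev B e \<in> gob_car B" using bz(2)[OF e] .
  have kr: "gog_hrev Y (gob_lam B e) k \<in> carrier (GG (gob_lam B (gob_rev B e)))"
    using hrev_closed[OF bz(6)[OF e] k] bz(8)[OF e] by simp
  show ?thesis
    unfolding bplus_def btgt_def hplus_def blact(2)[OF e k b] blact(1)[OF re kr bb(2)[OF e b]]
    using bz(8)[OF e] by simp
qed

lemma bplus_ract:
  assumes e: "e \<in> gob_car B" and h: "h \<in> carrier (gog_grp X (gob_rho B e))" and b: "b \<in> gob_set B e"
  shows "bplus B e (gob_ract B e b h) = gob_ract B (btgt B e) (bplus B e b) (hplus X (gob_rho B e) h)"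
proof -
  have re: "gob_rev B e \<in> gob_car B" using bz(2)[OF e] .
  have hr: "gog_hrev X (gob_rho B e) h \<in> carrier (gog_grp X (gob_rho B (gob_rev B e)))"
    using gog_facts(8)[OF grX bz(9)[OF e]] h bz(11)[OF e] by (auto simp: hom_def Pi_def)
  show ?thesis
    unfolding bplus_def btgt_def hplus_def bract(2)[OF e h b] bract(1)[OF re hr bb(2)[OF e b]]
    using bz(11)[OF e] by simp
qed

lemma bplus_rev:
  assumes e: "e \<in> gob_car B" and b: "b \<in> gob_set B e"
  shows "bplus B (gob_rev B e) (gob_crev B e b) = gob_csrc B e b"
  unfolding bplus_def using bz(4)[OF e] bb(3)[OF e b] by simp

end


context L18
begin

lemma actG_mult_v: "vnf u n \<Longrightarrow> h \<in> carrier (GG u) \<Longrightarrow> h' \<in> carrier (GG u) \<Longrightarrow>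
  actG h (actG h' n) = actG (h \<otimes>\<^bsub>GG u\<^esub> h') n"
  using actG_mult unfolding vnf_def by (cases n) auto

lemma actG_one_v: "vnf u n \<Longrightarrow> actG \<one>\<^bsub>GG u\<^esub> n = n"
  using actG_one unfolding vnf_def by (cases n) auto

lemma actE_inv_v: "x \<in> gog_car Y \<Longrightarrow> vnf (sY x) n \<Longrightarrow> actE x (actE (rY x) n) = n"
  using actE_inv by (cases n) auto

lemma actE_conj_v: "x \<in> gog_car Y \<Longrightarrow> g \<in> carrier (GG x) \<Longrightarrow> vnf (gtgt Y x) n \<Longrightarrow>
  actG (sm x g) (actE x n) = actE x (actG (hplus Y x g) n)"
  using actE_conj by (cases n) auto

lemma fib_parts:
  "\<forall>e\<in>bedges B. gob_rho B e \<in> gedges X"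
  "\<And>v f. v \<in> bverts B \<Longrightarrow> f \<in> gedges X \<Longrightarrow> gog_src X f = gob_rho B v \<Longrightarrow>
        bij_betw (\<lambda>c. the_elem (fib_map B v ` c))
                 (fib_dom B Y v f // fib_rel B Y v f) (gob_set B v)"
  using fibr unfolding left_fibrant_def by blast+

lemma lam_tgt: "e \<in> gob_car B \<Longrightarrow> gob_lam B (btgt B e) = gtgt Y (gob_lam B e)"
  unfolding btgt_def gtgt_def using bz(7)[OF bz(2)] bz(8) by simp

lemma rho_tgt: "e \<in> gob_car B \<Longrightarrow> gob_rho B (btgt B e) = gtgt X (gob_rho B e)"
  unfolding btgt_def gtgt_def using bz(10)[OF bz(2)] bz(11) by simp

lemma fib_dom_D:
  assumes "(e,g,b) \<in> fib_dom B Y w f"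
  shows "e \<in> bedges B" "e \<in> gob_car B" "gob_rho B e = f" "gob_src B e = w"
    "g \<in> carrier (GG (gob_lam B w))" "b \<in> gob_set B e"
  using assms unfolding fib_dom_def bedges_def edges_def by auto

lemma fibmap_rel:
  assumes w: "w \<in> bverts B" and r: "(y1,y2) \<in> fib_rel B Y w f"
  shows "fib_map B w y1 = fib_map B w y2"
proof -
  have "\<And>a b. (a,b) \<in> {((e, g \<otimes>\<^bsub>gog_grp Y (gob_lam B w)\<^esub> gog_hsrc Y (gob_lam B e) k, b), (e, g, gob_lact B e k b))
       | e g k b. k \<in> carrier (gog_grp Y (gob_lam B e))} \<Longrightarrow> a \<in> fib_dom B Y w f \<Longrightarrow> b \<in> fib_dom B Y w f \<Longrightarrow>
       fib_map B w a = fib_map B w b"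
  proof -
    fix a b0
    assume "(a,b0) \<in> {((e, g \<otimes>\<^bsub>gog_grp Y (gob_lam B w)\<^esub> gog_hsrc Y (gob_lam B e) k, b), (e, g, gob_lact B e k b))
       | e g k b. k \<in> carrier (gog_grp Y (gob_lam B e))}" and a: "a \<in> fib_dom B Y w f" and b0: "b0 \<in> fib_dom B Y w f"
    then obtain e g k b where ab: "a = (e, g \<otimes>\<^bsub>GG (gob_lam B w)\<^esub> sm (gob_lam B e) k, b)"
      "b0 = (e, g, gob_lact B e k b)" and k: "k \<in> carrier (GG (gob_lam B e))" by blast
    note d1 = fib_dom_D[OF a[unfolded ab(1)]] and d2 = fib_dom_D[OF b0[unfolded ab(2)]]
    have lw: "sY (gob_lam B e) = gob_lam B w" using bz(7)[OF d1(2)] d1(4) by simp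
    have m: "sm (gob_lam B e) k \<in> carrier (GG (gob_lam B w))" using sm_closed[OF bz(6)[OF d1(2)] k] lw by simp
    have cs: "gob_csrc B e b \<in> gob_set B w" using bb(1)[OF d1(2) d1(6)] d1(4) by simp
    have bis: "is_biset (GG (gob_lam B w)) (gog_grp X (gob_rho B w)) (gob_set B w) (gob_lact B w) (gob_ract B w)"
      using bv_facts(5)[OF w] .
    have "gob_lact B w (g \<otimes>\<^bsub>GG (gob_lam B w)\<^esub> sm (gob_lam B e) k) (gob_csrc B e b)
        = gob_lact B w g (gob_lact B w (sm (gob_lam B e) k) (gob_csrc B e b))"
      using bis d2(5) m cs unfolding is_biset_def by blast
    also have "\<dots> = gob_lact B w g (gob_csrc B e (gob_lact B e k b))"
      using blact(1)[OF d1(2) k d1(6)] d1(4) by simp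
    finally show "fib_map B w a = fib_map B w b0" unfolding ab fib_map_def by simp
  qed
  then show ?thesis using eqc_inv[of _ "fib_dom B Y w f" "fib_map B w"] r unfolding fib_rel_def by blast
qed

lemma fib_refl: "y \<in> fib_dom B Y w f \<Longrightarrow> (y,y) \<in> fib_rel B Y w f"
  unfolding fib_rel_def by (rule eqc_refl)

lemma dec_ex:
  assumes w: "w \<in> bverts B" and f: "f \<in> gedges X" "gog_src X f = gob_rho B w" and c: "c \<in> gob_set B w"
  shows "\<exists>y. y \<in> fib_dom B Y w f \<and> fib_map B w y = c"
proof -
  note bij = fib_parts(2)[OF w f]
  have "c \<in> (\<lambda>c. the_elem (fib_map B w ` c)) ` (fib_dom B Y w f // fib_rel B Y w f)"
    using bij c unfolding bij_betw_def by simp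
  then obtain C where C: "C \<in> fib_dom B Y w f // fib_rel B Y w f" "the_elem (fib_map B w ` C) = c"
    by (rule imageE) (rule that, assumption, rule sym, assumption)
  obtain y where y: "y \<in> fib_dom B Y w f" "C = fib_rel B Y w f `` {y}"
    by (rule quotientE[OF C(1)]) (rule that, assumption, assumption)
  have "fib_map B w ` C = {fib_map B w y}"
  proof
    show "fib_map B w ` C \<subseteq> {fib_map B w y}"
    proof
      fix v assume "v \<in> fib_map B w ` C"
      then obtain y' where "y' \<in> C" "v = fib_map B w y'" by blast
      then show "v \<in> {fib_map B w y}" using y(2) fibmap_rel[OF w, of y y'] by simp
    qed
    show "{fib_map B w y} \<subseteq> fib_map B w ` C" using y(2) fib_refl[OF y(1)] by simp
  qed
  then have "c = fib_map B w y" using C(2) by simp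
  then show ?thesis using y(1) by blast
qed

lemma dec_uniq:
  assumes w: "w \<in> bverts B" and f: "f \<in> gedges X" "gog_src X f = gob_rho B w"
    and y: "y1 \<in> fib_dom B Y w f" "y2 \<in> fib_dom B Y w f" "fib_map B w y1 = fib_map B w y2"
  shows "(y1, y2) \<in> fib_rel B Y w f"
proof -
  note bij = fib_parts(2)[OF w f]
  let ?R = "fib_rel B Y w f"
  have eq: "equiv (fib_dom B Y w f) ?R" unfolding fib_rel_def by (rule equiv_eqc)
  have C: "?R `` {y1} \<in> fib_dom B Y w f // ?R" "?R `` {y2} \<in> fib_dom B Y w f // ?R"
    using y(1) y(2) by (blast intro: quotientI)+
  have im: "\<And>y. y \<in> fib_dom B Y w f \<Longrightarrow> fib_map B w ` (?R `` {y}) = {fib_map B w y}"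
  proof -
    fix y assume yy: "y \<in> fib_dom B Y w f"
    show "fib_map B w ` (?R `` {y}) = {fib_map B w y}"
    proof
      show "fib_map B w ` (?R `` {y}) \<subseteq> {fib_map B w y}"
      proof
        fix v assume "v \<in> fib_map B w ` (?R `` {y})"
        then obtain y' where "y' \<in> ?R `` {y}" "v = fib_map B w y'" by blast
        then show "v \<in> {fib_map B w y}" using fibmap_rel[OF w, of y y'] by simp
      qed
      show "{fib_map B w y} \<subseteq> fib_map B w ` (?R `` {y})" using fib_refl[OF yy] by simp
    qed
  qed
  have inj: "inj_on (\<lambda>c. the_elem (fib_map B w ` c)) (fib_dom B Y w f // ?R)"
    using bij unfolding bij_betw_def by blast
  have "(\<lambda>c. the_elem (fib_map B w ` c)) (?R `` {y1}) = (\<lambda>c. the_elem (fib_map B w ` c)) (?R `` {y2})"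
    unfolding im[OF y(1)] im[OF y(2)] using y(3) by simp
  then have "?R `` {y1} = ?R `` {y2}" using inj_onD[OF inj _ C(1) C(2)] by blast
  moreover have "y2 \<in> ?R `` {y2}" using fib_refl[OF y(2)] by (simp only: Image_singleton_iff)
  ultimately have "y2 \<in> ?R `` {y1}" by (simp only:)
  then show ?thesis by (simp only: Image_singleton_iff)
qed

definition dec :: "'z \<Rightarrow> 'x \<Rightarrow> 'b \<Rightarrow> 'z \<times> 'g \<times> 'b" where
  "dec w f c = (SOME y. y \<in> fib_dom B Y w f \<and> fib_map B w y = c)"

lemma dec_prop:
  assumes "w \<in> bverts B" "f \<in> gedges X" "gog_src X f = gob_rho B w" "c \<in> gob_set B w"
  shows "dec w f c \<in> fib_dom B Y w f \<and> fib_map B w (dec w f c) = c"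
  unfolding dec_def using someI_ex[OF dec_ex[OF assms]] .

end


context L18
begin

fun Psi :: "'z \<Rightarrow> 'b \<Rightarrow> ('x,'h) letter list \<Rightarrow> ('y \<times> 'g) list \<times> 'z \<times> 'b" where
  "Psi w c [] = ([], w, c)"
| "Psi w c (Elt u h # p) = Psi w (gob_ract B w c h) p"
| "Psi w c (Gen f # p) = (if gog_src X f = f then Psi w c p else
     (let y = dec w f c in actG (fst (snd y)) (actE (gob_lam B (fst y))
        (Psi (btgt B (fst y)) (bplus B (fst y) (snd (snd y))) p))))"

definition Edec :: "('x,'h) letter list \<Rightarrow> 'z \<times> 'g \<times> 'b \<Rightarrow> ('y \<times> 'g) list \<times> 'z \<times> 'b" where
  "Edec p y = actG (fst (snd y)) (actE (gob_lam B (fst y)) (Psi (btgt B (fst y)) (bplus B (fst y) (snd (snd y))) p))"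

lemma Psi_Gen_edge: "gog_src X f \<noteq> f \<Longrightarrow> Psi w c (Gen f # p) = Edec p (dec w f c)"
  unfolding Edec_def by (simp add: Let_def)

definition QP :: "('x,'h) letter list \<Rightarrow> bool" where
  "QP p = (\<forall>w c s. w \<in> bverts B \<longrightarrow> c \<in> gob_set B w \<longrightarrow> valid_word X p (gob_rho B w) s \<longrightarrow>
     vnf (gob_lam B w) (Psi w c p) \<and>
     (\<forall>k\<in>carrier (GG (gob_lam B w)). Psi w (gob_lact B w k c) p = actG k (Psi w c p)))"

lemma QP_D:
  assumes "QP p" "w \<in> bverts B" "c \<in> gob_set B w" "valid_word X p (gob_rho B w) s"
  shows "vnf (gob_lam B w) (Psi w c p)"
    "\<And>k. k \<in> carrier (GG (gob_lam B w)) \<Longrightarrow> Psi w (gob_lact B w k c) p = actG k (Psi w c p)"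
  using assms unfolding QP_def by blast+

lemma lam_src_e: "e \<in> gob_car B \<Longrightarrow> gob_src B e = w \<Longrightarrow> sY (gob_lam B e) = gob_lam B w"
  using bz(7) by metis

lemma Edec_inv:
  assumes Q: "QP p" and w: "w \<in> bverts B" and f: "f \<in> gedges X" "gog_src X f = gob_rho B w"
    and pv: "valid_word X p (gtgt X f) s" and r: "(y1,y2) \<in> fib_rel B Y w f"
  shows "Edec p y1 = Edec p y2"
proof -
  have "\<And>a b. (a,b) \<in> {((e, g \<otimes>\<^bsub>gog_grp Y (gob_lam B w)\<^esub> gog_hsrc Y (gob_lam B e) k, b), (e, g, gob_lact B e k b))
       | e g k b. k \<in> carrier (gog_grp Y (gob_lam B e))} \<Longrightarrow> a \<in> fib_dom B Y w f \<Longrightarrow> b \<in> fib_dom B Y w f \<Longrightarrow>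
       Edec p a = Edec p b"
  proof -
    fix a b0
    assume "(a,b0) \<in> {((e, g \<otimes>\<^bsub>gog_grp Y (gob_lam B w)\<^esub> gog_hsrc Y (gob_lam B e) k, b), (e, g, gob_lact B e k b))
       | e g k b. k \<in> carrier (gog_grp Y (gob_lam B e))}" and a: "a \<in> fib_dom B Y w f" and b0: "b0 \<in> fib_dom B Y w f"
    then obtain e g k b where ab: "a = (e, g \<otimes>\<^bsub>GG (gob_lam B w)\<^esub> sm (gob_lam B e) k, b)"
      "b0 = (e, g, gob_lact B e k b)" and k: "k \<in> carrier (GG (gob_lam B e))" by blast
    note d1 = fib_dom_D[OF a[unfolded ab(1)]] and d2 = fib_dom_D[OF b0[unfolded ab(2)]]
    have le: "gob_lam B e \<in> gog_car Y" using bz(6)[OF d1(2)] .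
    have lw: "sY (gob_lam B e) = gob_lam B w" using lam_src_e[OF d1(2) d1(4)] .
    define te where "te = btgt B e"
    have te: "te \<in> bverts B" using btgt_vert[OF d1(2)] te_def by simp
    have bp: "bplus B e b \<in> gob_set B te" using bplus_mem[OF d1(2) d1(6)] te_def by simp
    have rte: "gob_rho B te = gtgt X f" using rho_tgt[OF d1(2)] d1(3) te_def by simp
    have lte: "gob_lam B te = gtgt Y (gob_lam B e)" using lam_tgt[OF d1(2)] te_def by simp
    have pv': "valid_word X p (gob_rho B te) s" using pv rte by simp
    define N where "N = Psi te (bplus B e b) p"
    have V: "vnf (gtgt Y (gob_lam B e)) N" using QP_D(1)[OF Q te bp pv'] lte N_def by simp
    have hk: "hplus Y (gob_lam B e) k \<in> carrier (GG (gob_lam B te))" using hplus_closed[OF le k] lte by simp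
    have EQ: "Psi te (gob_lact B te (hplus Y (gob_lam B e) k) (bplus B e b)) p = actG (hplus Y (gob_lam B e) k) N"
      using QP_D(2)[OF Q te bp pv' hk] N_def by simp
    have V2: "vnf (gob_lam B w) (actE (gob_lam B e) N)" using vnf_actE[OF le V] lw by simp
    have smk: "sm (gob_lam B e) k \<in> carrier (GG (gob_lam B w))" using sm_closed[OF le k] lw by simp
    have "Edec p b0 = actG g (actE (gob_lam B e) (Psi te (bplus B e (gob_lact B e k b)) p))"
      unfolding Edec_def ab(2) te_def by simp
    also have "\<dots> = actG g (actE (gob_lam B e) (actG (hplus Y (gob_lam B e) k) N))"
      using bplus_lact[OF d1(2) k d1(6)] EQ te_def by simp
    also have "\<dots> = actG g (actG (sm (gob_lam B e) k) (actE (gob_lam B e) N))"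
      using actE_conj_v[OF le k V] by simp
    also have "\<dots> = actG (g \<otimes>\<^bsub>GG (gob_lam B w)\<^esub> sm (gob_lam B e) k) (actE (gob_lam B e) N)"
      using actG_mult_v[OF V2 d2(5) smk] .
    also have "\<dots> = Edec p a" unfolding Edec_def ab(1) N_def te_def by simp
    finally show "Edec p a = Edec p b0" by simp
  qed
  then show ?thesis using eqc_inv[of _ "fib_dom B Y w f" "Edec p"] r unfolding fib_rel_def by blast
qed

end


context L18
begin

lemma gedges_I: "f \<in> gog_car X \<Longrightarrow> gog_src X f \<noteq> f \<Longrightarrow> f \<in> gedges X"
  unfolding gedges_def edges_def by simp

lemma fib_dom_I:
  assumes "e \<in> bedges B" "gob_rho B e = f" "gob_src B e = w" "g \<in> carrier (GG (gob_lam B w))" "b \<in> gob_set B e"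
  shows "(e,g,b) \<in> fib_dom B Y w f"
  using assms unfolding fib_dom_def by simp

lemma Psi_dec:
  assumes Q: "QP p" and w: "w \<in> bverts B" and f: "f \<in> gedges X" "gog_src X f = gob_rho B w"
    and pv: "valid_word X p (gtgt X f) s" and c: "c \<in> gob_set B w"
    and y: "y \<in> fib_dom B Y w f" "fib_map B w y = c"
  shows "Psi w c (Gen f # p) = Edec p y"
proof -
  have fe: "gog_src X f \<noteq> f" using f(1) unfolding gedges_def edges_def by simp
  note dp = dec_prop[OF w f c]
  have "(dec w f c, y) \<in> fib_rel B Y w f" using dec_uniq[OF w f dp[THEN conjunct1] y(1)] dp y(2) by simp
  then show ?thesis using Psi_Gen_edge[OF fe] Edec_inv[OF Q w f pv] by simp
qed

lemma QP_all: "QP p"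
proof (induction p)
  case Nil
  show ?case unfolding QP_def vnf_def by simp
next
  case (Cons a p)
  show ?case unfolding QP_def
  proof (intro allI impI)
    fix w c s
    assume w: "w \<in> bverts B" and c: "c \<in> gob_set B w" and v: "valid_word X (a # p) (gob_rho B w) s"
    have bis: "is_biset (GG (gob_lam B w)) (gog_grp X (gob_rho B w)) (gob_set B w) (gob_lact B w) (gob_ract B w)"
      using bv_facts(5)[OF w] .
    show "vnf (gob_lam B w) (Psi w c (a # p)) \<and>
       (\<forall>k\<in>carrier (GG (gob_lam B w)). Psi w (gob_lact B w k c) (a # p) = actG k (Psi w c (a # p)))"
    proof (cases a)
      case (Elt u h)
      have uv: "u = gob_rho B w" "h \<in> carrier (gog_grp X u)" "valid_word X p u s" using v Elt by auto
      have c': "gob_ract B w c h \<in> gob_set B w" using bis c uv unfolding is_biset_def by blast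
      have pv: "valid_word X p (gob_rho B w) s" using uv by simp
      note IH = QP_D[OF Cons.IH w c' pv]
      have "\<forall>k\<in>carrier (GG (gob_lam B w)). Psi w (gob_lact B w k c) (a # p) = actG k (Psi w c (a # p))"
      proof
        fix k assume k: "k \<in> carrier (GG (gob_lam B w))"
        have "gob_ract B w (gob_lact B w k c) h = gob_lact B w k (gob_ract B w c h)"
          using bis k c uv unfolding is_biset_def by metis
        then show "Psi w (gob_lact B w k c) (a # p) = actG k (Psi w c (a # p))"
          using IH(2)[OF k] Elt by simp
      qed
      then show ?thesis using IH(1) Elt by simp
    next
      case (Gen f)
      have fv: "f \<in> gog_car X" "gog_src X f = gob_rho B w" "valid_word X p (gtgt X f) s" using v Gen by auto
      show ?thesis
      proof (cases "gog_src X f = f")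
        case True
        have "gtgt X f = gob_rho B w" unfolding gtgt_def using True fv gog_facts(5)[OF grX fv(1)] by metis
        then have pv: "valid_word X p (gob_rho B w) s" using fv by simp
        note IH = QP_D[OF Cons.IH w c pv]
        show ?thesis using IH Gen True by simp
      next
        case False
        have f: "f \<in> gedges X" using gedges_I[OF fv(1) False] .
        note dp = dec_prop[OF w f fv(2) c]
        obtain e g b where y: "dec w f c = (e,g,b)" by (metis prod.exhaust)
        have yd: "(e,g,b) \<in> fib_dom B Y w f" "fib_map B w (e,g,b) = c" using dp y by auto
        note d = fib_dom_D[OF yd(1)]
        have le: "gob_lam B e \<in> gog_car Y" using bz(6)[OF d(2)] .
        have lw: "sY (gob_lam B e) = gob_lam B w" using lam_src_e[OF d(2) d(4)] .
        define te where "te = btgt B e"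
        have te: "te \<in> bverts B" using btgt_vert[OF d(2)] te_def by simp
        have bp: "bplus B e b \<in> gob_set B te" using bplus_mem[OF d(2) d(6)] te_def by simp
        have rte: "gob_rho B te = gtgt X f" using rho_tgt[OF d(2)] d(3) te_def by simp
        have lte: "gob_lam B te = gtgt Y (gob_lam B e)" using lam_tgt[OF d(2)] te_def by simp
        have pv': "valid_word X p (gob_rho B te) s" using fv(3) rte by simp
        define N where "N = Psi te (bplus B e b) p"
        have V: "vnf (gtgt Y (gob_lam B e)) N" using QP_D(1)[OF Cons.IH te bp pv'] lte N_def by simp
        have V2: "vnf (gob_lam B w) (actE (gob_lam B e) N)" using vnf_actE[OF le V] lw by simp
        have Pe: "Psi w c (a # p) = actG g (actE (gob_lam B e) N)"
          unfolding Gen Psi_Gen_edge[OF False] y Edec_def N_def te_def by simp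
        have "\<forall>k\<in>carrier (GG (gob_lam B w)). Psi w (gob_lact B w k c) (a # p) = actG k (Psi w c (a # p))"
        proof
          fix k assume k: "k \<in> carrier (GG (gob_lam B w))"
          interpret H: group "GG (gob_lam B w)" using grp_src[OF le] lw by simp
          have kg: "k \<otimes>\<^bsub>GG (gob_lam B w)\<^esub> g \<in> carrier (GG (gob_lam B w))" using k d(5) by simp
          have y': "(e, k \<otimes>\<^bsub>GG (gob_lam B w)\<^esub> g, b) \<in> fib_dom B Y w f"
            using fib_dom_I[OF d(1) d(3) d(4) kg d(6)] .
          have cs: "gob_csrc B e b \<in> gob_set B w" using bb(1)[OF d(2) d(6)] d(4) by simp
          have fm: "fib_map B w (e, k \<otimes>\<^bsub>GG (gob_lam B w)\<^esub> g, b) = gob_lact B w k c"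
          proof -
            have "fib_map B w (e, k \<otimes>\<^bsub>GG (gob_lam B w)\<^esub> g, b) = gob_lact B w (k \<otimes>\<^bsub>GG (gob_lam B w)\<^esub> g) (gob_csrc B e b)"
              unfolding fib_map_def by simp
            also have "\<dots> = gob_lact B w k (gob_lact B w g (gob_csrc B e b))"
              using bis k d(5) cs unfolding is_biset_def by blast
            also have "\<dots> = gob_lact B w k c" using yd(2) unfolding fib_map_def by simp
            finally show ?thesis .
          qed
          have kc: "gob_lact B w k c \<in> gob_set B w" using bis k c unfolding is_biset_def by blast
          have "Psi w (gob_lact B w k c) (a # p) = Edec p (e, k \<otimes>\<^bsub>GG (gob_lam B w)\<^esub> g, b)"
            unfolding Gen using Psi_dec[OF Cons.IH w f fv(2) fv(3) kc y' fm] .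
          also have "\<dots> = actG (k \<otimes>\<^bsub>GG (gob_lam B w)\<^esub> g) (actE (gob_lam B e) N)"
            unfolding Edec_def N_def te_def by simp
          also have "\<dots> = actG k (actG g (actE (gob_lam B e) N))"
            using actG_mult_v[OF V2 k d(5)] by simp
          finally show "Psi w (gob_lact B w k c) (a # p) = actG k (Psi w c (a # p))" using Pe by simp
        qed
        moreover have "vnf (gob_lam B w) (Psi w c (a # p))" using Pe vnf_actG[OF V2 d(5)] by simp
        ultimately show ?thesis by simp
      qed
    qed
  qed
qed

end


context L18
begin

lemma X_rev_edge: assumes "f \<in> gedges X" shows "gog_rev X f \<in> gedges X"
proof -
  have f: "f \<in> gog_car X" "gog_src X f \<noteq> f" using assms unfolding gedges_def edges_def by auto
  have r: "gog_rev X f \<in> gog_car X" using fX(2)[OF f(1)] .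
  have "gog_src X (gog_rev X f) \<noteq> gog_rev X f"
  proof
    assume "gog_src X (gog_rev X f) = gog_rev X f"
    then have "gog_rev X f = gog_rev X (gog_rev X f)" using fX(5)[OF r] by simp
    then have "gog_rev X f = f" using fX(4)[OF f(1)] by simp
    then show False using fX(5)[OF f(1)] f(2) by simp
  qed
  then show ?thesis using r unfolding gedges_def edges_def by simp
qed

lemma back_forth:
  assumes e: "e \<in> bedges B" and b: "b \<in> gob_set B e" and pv: "valid_word X p (gob_rho B (gob_src B e)) s"
  shows "actE (gob_lam B e) (Psi (btgt B e) (bplus B e b) (Gen (gog_rev X (gob_rho B e)) # p)) =
         Psi (gob_src B e) (gob_csrc B e b) p"
proof -
  have ec: "e \<in> gob_car B" using bedge_D[OF e] by simp
  define te where "te = btgt B e"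
  define f' where "f' = gog_rev X (gob_rho B e)"
  have re: "gob_rev B e \<in> bedges B" using rev_edge[OF e] .
  have rec: "gob_rev B e \<in> gob_car B" using bz(2)[OF ec] .
  have te: "te \<in> bverts B" using btgt_vert[OF ec] te_def by simp
  have bp: "bplus B e b \<in> gob_set B te" using bplus_mem[OF ec b] te_def by simp
  have f': "f' \<in> gedges X" using X_rev_edge fib_parts(1) e f'_def by blast
  have rhoe: "gob_rho B e \<in> gog_car X" using bz(9)[OF ec] .
  have sf': "gog_src X f' = gob_rho B te" unfolding f'_def te_def using rho_tgt[OF ec] unfolding gtgt_def by simp
  have pv': "valid_word X p (gtgt X f') s"
    using pv bz(10)[OF ec] unfolding f'_def gtgt_def using gog_facts(4)[OF grX rhoe] by simp
  have src_re: "gob_src B (gob_rev B e) = te" unfolding te_def btgt_def ..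
  have lte: "gob_lam B te = sY (gob_lam B (gob_rev B e))" using bz(7)[OF rec] src_re by simp
  have ltc: "gob_lam B te \<in> gog_car Y" using bv_facts(1)[OF te] unfolding gverts_def verts_def by simp
  have one: "\<one>\<^bsub>GG (gob_lam B te)\<^esub> \<in> carrier (GG (gob_lam B te))"
    using monoid.one_closed[OF group.is_monoid[OF fY(6)[OF ltc]]] .
  have crb: "gob_crev B e b \<in> gob_set B (gob_rev B e)" using bb(2)[OF ec b] .
  have y: "(gob_rev B e, \<one>\<^bsub>GG (gob_lam B te)\<^esub>, gob_crev B e b) \<in> fib_dom B Y te f'"
    by (rule fib_dom_I[OF re _ src_re one crb]) (simp add: bz(11)[OF ec] f'_def)
  have bis: "is_biset (GG (gob_lam B te)) (gog_grp X (gob_rho B te)) (gob_set B te) (gob_lact B te) (gob_ract B te)"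
    using bv_facts(5)[OF te] .
  have cs: "gob_csrc B (gob_rev B e) (gob_crev B e b) \<in> gob_set B te" using bb(1)[OF rec crb] src_re by simp
  have fm: "fib_map B te (gob_rev B e, \<one>\<^bsub>GG (gob_lam B te)\<^esub>, gob_crev B e b) = bplus B e b"
    unfolding fib_map_def bplus_def using bis cs unfolding is_biset_def by simp
  have "Psi te (bplus B e b) (Gen f' # p) = Edec p (gob_rev B e, \<one>\<^bsub>GG (gob_lam B te)\<^esub>, gob_crev B e b)"
    using Psi_dec[OF QP_all te f' sf' pv' bp y fm] .
  also have "\<dots> = actG \<one>\<^bsub>GG (gob_lam B te)\<^esub> (actE (rY (gob_lam B e)) (Psi (gob_src B e) (gob_csrc B e b) p))"
    unfolding Edec_def using bplus_rev[OF ec b] bz(8)[OF ec] bz(4)[OF ec] unfolding btgt_def by simp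
  finally have E: "Psi te (bplus B e b) (Gen f' # p) =
      actG \<one>\<^bsub>GG (gob_lam B te)\<^esub> (actE (rY (gob_lam B e)) (Psi (gob_src B e) (gob_csrc B e b) p))" .
  have sv: "gob_src B e \<in> bverts B" using src_vert[OF ec] .
  have csb: "gob_csrc B e b \<in> gob_set B (gob_src B e)" using bb(1)[OF ec b] .
  have le: "gob_lam B e \<in> gog_car Y" using bz(6)[OF ec] .
  define N0 where "N0 = Psi (gob_src B e) (gob_csrc B e b) p"
  have V0: "vnf (sY (gob_lam B e)) N0" using QP_D(1)[OF QP_all sv csb pv] bz(7)[OF ec] N0_def by simp
  have V1: "vnf (sY (rY (gob_lam B e))) (actE (rY (gob_lam B e)) N0)"
    using vnf_actE[OF fY(2)[OF le]] V0 gtgt_rev[OF le] by simp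
  have lte2: "gob_lam B te = sY (rY (gob_lam B e))" using lte bz(8)[OF ec] by simp
  have "actG \<one>\<^bsub>GG (gob_lam B te)\<^esub> (actE (rY (gob_lam B e)) N0) = actE (rY (gob_lam B e)) N0"
    using actG_one_v[OF V1] lte2 by simp
  then show ?thesis using E actE_inv_v[OF le V0] unfolding te_def f'_def N0_def by simp
qed

end


context L18
begin

lemma Psi_edge_dec:
  assumes w: "w \<in> bverts B" and f: "f \<in> gog_car X" "gog_src X f = gob_rho B w" "gog_src X f \<noteq> f"
    and c: "c \<in> gob_set B w"
  obtains e g b where "(e,g,b) \<in> fib_dom B Y w f" "fib_map B w (e,g,b) = c"
    "\<And>p. Psi w c (Gen f # p) = actG g (actE (gob_lam B e) (Psi (btgt B e) (bplus B e b) p))"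
proof -
  have fe: "f \<in> gedges X" using gedges_I[OF f(1) f(3)] .
  note dp = dec_prop[OF w fe f(2) c]
  obtain e g b where y: "dec w f c = (e,g,b)" by (metis prod.exhaust)
  show ?thesis
    by (rule that[of e g b]) (use dp y in simp, use dp y in simp, simp add: f(3) y Let_def)
qed

lemma basic_X:
  assumes lr: "(l, r) \<in> basic_rel X" and w: "w \<in> bverts B" and c: "c \<in> gob_set B w"
    and vl: "valid_word X (l @ t) (gob_rho B w) s" and vr: "valid_word X (r @ t) (gob_rho B w) s"
  shows "Psi w c (l @ t) = Psi w c (r @ t)"
  using lr
proof (cases rule: basic_rel.cases)
  case (mult v g h)
  have bis: "is_biset (GG (gob_lam B w)) (gog_grp X (gob_rho B w)) (gob_set B w) (gob_lact B w) (gob_ract B w)"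
    using bv_facts(5)[OF w] .
  have vv: "v = gob_rho B w" using vl mult by simp
  have "gob_ract B w c (g \<otimes>\<^bsub>gog_grp X v\<^esub> h) = gob_ract B w (gob_ract B w c g) h"
    using bis mult c vv unfolding is_biset_def by blast
  then show ?thesis using mult by simp
next
  case (one v)
  have bis: "is_biset (GG (gob_lam B w)) (gog_grp X (gob_rho B w)) (gob_set B w) (gob_lact B w) (gob_ract B w)"
    using bv_facts(5)[OF w] .
  have vv: "v = gob_rho B w" using vl one by simp
  have "gob_ract B w c \<one>\<^bsub>gog_grp X v\<^esub> = c" using bis c vv unfolding is_biset_def by blast
  then show ?thesis using one by simp
next
  case (vert v)
  then show ?thesis by (simp add: gverts_def verts_def)
next
  case (inv f)
  have fv: "f \<in> gog_car X" "gog_src X f = gob_rho B w" using vl inv by auto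
  have gr: "gtgt X (gog_rev X f) = gog_src X f" unfolding gtgt_def using gog_facts(4)[OF grX fv(1)] by simp
  have tv: "valid_word X t (gob_rho B w) s" using vl inv fv gr by auto
  show ?thesis
  proof (cases "gog_src X f = f")
    case True
    then have "gog_rev X f = f" using gog_facts(5)[OF grX fv(1)] by metis
    then show ?thesis using inv True by simp
  next
    case False
    obtain e g b where y: "(e,g,b) \<in> fib_dom B Y w f" "fib_map B w (e,g,b) = c"
      and P: "\<And>p. Psi w c (Gen f # p) = actG g (actE (gob_lam B e) (Psi (btgt B e) (bplus B e b) p))"
      using Psi_edge_dec[OF w fv False c] by blast
    note d = fib_dom_D[OF y(1)]
    have pv: "valid_word X t (gob_rho B (gob_src B e)) s" using tv d(4) by simp
    have "Psi w c (l @ t) = actG g (Psi (gob_src B e) (gob_csrc B e b) t)"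
      using inv P back_forth[OF d(1) d(6) pv] d(3) by simp
    also have "\<dots> = Psi w (gob_lact B w g (gob_csrc B e b)) t"
      using QP_D(2)[OF QP_all w _ tv d(5), of "gob_csrc B e b"] bb(1)[OF d(2) d(6)] d(4) by simp
    also have "\<dots> = Psi w c t" using y(2) unfolding fib_map_def by simp
    finally show ?thesis using inv by simp
  qed
next
  case (conj f h)
  have fv: "f \<in> gog_car X" "gog_src X f = gob_rho B w" "h \<in> carrier (gog_grp X f)" using vl conj by auto
  show ?thesis
  proof (cases "gog_src X f = f")
    case True
    have "gog_hsrc X f h = h" "hplus X f h = h"
      using gog_vert[OF grX fv(1) True fv(3)] unfolding hplus_def
      using gog_facts(5)[OF grX fv(1)] True by (metis)+
    then show ?thesis using conj True by simp
  next
    case False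
    obtain e g b where y: "(e,g,b) \<in> fib_dom B Y w f" "fib_map B w (e,g,b) = c"
      and P: "\<And>p. Psi w c (Gen f # p) = actG g (actE (gob_lam B e) (Psi (btgt B e) (bplus B e b) p))"
      using Psi_edge_dec[OF w fv(1,2) False c] by blast
    note d = fib_dom_D[OF y(1)]
    have bis: "is_biset (GG (gob_lam B w)) (gog_grp X (gob_rho B w)) (gob_set B w) (gob_lact B w) (gob_ract B w)"
      using bv_facts(5)[OF w] .
    have bise: "is_biset (GG (gob_lam B e)) (gog_grp X (gob_rho B e)) (gob_set B e) (gob_lact B e) (gob_ract B e)"
      using bz_biset[OF d(2)] .
    have hc: "h \<in> carrier (gog_grp X (gob_rho B e))" using fv(3) d(3) by simp
    have hs: "gog_hsrc X f h \<in> carrier (gog_grp X (gob_rho B w))"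
      using gog_facts(7)[OF grX fv(1)] fv(2,3) by (auto simp: hom_def Pi_def)
    have c': "gob_ract B w c (gog_hsrc X f h) \<in> gob_set B w" using bis c hs unfolding is_biset_def by blast
    have bh: "gob_ract B e b h \<in> gob_set B e" using bise d(6) hc unfolding is_biset_def by blast
    have y': "(e, g, gob_ract B e b h) \<in> fib_dom B Y w f" using fib_dom_I[OF d(1) d(3) d(4) d(5) bh] .
    have cs: "gob_csrc B e b \<in> gob_set B w" using bb(1)[OF d(2) d(6)] d(4) by simp
    have fm: "fib_map B w (e, g, gob_ract B e b h) = gob_ract B w c (gog_hsrc X f h)"
    proof -
      have "fib_map B w (e, g, gob_ract B e b h) = gob_lact B w g (gob_ract B w (gob_csrc B e b) (gog_hsrc X f h))"
        unfolding fib_map_def using bract(1)[OF d(2) hc d(6)] d(3,4) by simp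
      also have "\<dots> = gob_ract B w (gob_lact B w g (gob_csrc B e b)) (gog_hsrc X f h)"
        using bis d(5) hs cs unfolding is_biset_def by blast
      finally show ?thesis using y(2) unfolding fib_map_def by simp
    qed
    have fe: "f \<in> gedges X" using gedges_I[OF fv(1) False] .
    have tv: "valid_word X t (gtgt X f) s" using vl conj by auto
    have "Psi w c (l @ t) = Psi w (gob_ract B w c (gog_hsrc X f h)) (Gen f # t)" using conj by simp
    also have "\<dots> = Edec t (e, g, gob_ract B e b h)" using Psi_dec[OF QP_all w fe fv(2) tv c' y' fm] .
    also have "\<dots> = actG g (actE (gob_lam B e) (Psi (btgt B e) (gob_ract B (btgt B e) (bplus B e b) (hplus X f h)) t))"
      unfolding Edec_def using bplus_ract[OF d(2) hc d(6)] d(3) by simp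
    also have "\<dots> = Psi w c (r @ t)" using conj P by simp
    finally show ?thesis .
  qed
qed

lemma step_X_aux:
  assumes lr: "(l, r) \<in> basic_rel X"
  shows "w \<in> bverts B \<Longrightarrow> c \<in> gob_set B w \<Longrightarrow> valid_word X (u @ l @ t) (gob_rho B w) s \<Longrightarrow>
    valid_word X (u @ r @ t) (gob_rho B w) s \<Longrightarrow> Psi w c (u @ l @ t) = Psi w c (u @ r @ t)"
proof (induction u arbitrary: w c)
  case Nil
  then show ?case using basic_X[OF lr] by simp
next
  case (Cons a u)
  show ?case
  proof (cases a)
    case (Elt v h)
    have vv: "v = gob_rho B w" "h \<in> carrier (gog_grp X v)" using Cons.prems(3) Elt by auto
    have bis: "is_biset (GG (gob_lam B w)) (gog_grp X (gob_rho B w)) (gob_set B w) (gob_lact B w) (gob_ract B w)"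
      using bv_facts(5)[OF Cons.prems(1)] .
    have c': "gob_ract B w c h \<in> gob_set B w" using bis Cons.prems(2) vv unfolding is_biset_def by blast
    show ?thesis using Cons.IH[OF Cons.prems(1) c'] Cons.prems(3,4) Elt vv by simp
  next
    case (Gen f)
    have fv: "f \<in> gog_car X" "gog_src X f = gob_rho B w" using Cons.prems(3) Gen by auto
    show ?thesis
    proof (cases "gog_src X f = f")
      case True
      have "gtgt X f = gob_rho B w" unfolding gtgt_def using True fv gog_facts(5)[OF grX fv(1)] by metis
      then show ?thesis using Cons.IH[OF Cons.prems(1,2)] Cons.prems(3,4) Gen True by simp
    next
      case False
      obtain e g b where y: "(e,g,b) \<in> fib_dom B Y w f" "fib_map B w (e,g,b) = c"
        and P: "\<And>p. Psi w c (Gen f # p) = actG g (actE (gob_lam B e) (Psi (btgt B e) (bplus B e b) p))"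
        using Psi_edge_dec[OF Cons.prems(1) fv False Cons.prems(2)] by blast
      note d = fib_dom_D[OF y(1)]
      have te: "btgt B e \<in> bverts B" using btgt_vert[OF d(2)] .
      have bp: "bplus B e b \<in> gob_set B (btgt B e)" using bplus_mem[OF d(2) d(6)] .
      have rte: "gob_rho B (btgt B e) = gtgt X f" using rho_tgt[OF d(2)] d(3) by simp
      have "Psi (btgt B e) (bplus B e b) (u @ l @ t) = Psi (btgt B e) (bplus B e b) (u @ r @ t)"
        using Cons.IH[OF te bp] Cons.prems(3,4) Gen rte by simp
      then show ?thesis using P Gen by simp
    qed
  qed
qed

lemma step_X:
  assumes "(p, p') \<in> word_step X" "w \<in> bverts B" "c \<in> gob_set B w"
    "valid_word X p (gob_rho B w) s" "valid_word X p' (gob_rho B w) s"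
  shows "Psi w c p = Psi w c p'"
proof -
  obtain u l r t where q: "p = u @ l @ t" "p' = u @ r @ t" "(l,r) \<in> basic_rel X"
    using assms(1) unfolding word_step_def by blast
  show ?thesis using step_X_aux[OF q(3) assms(2,3)] assms(4,5) q by simp
qed

end


context L18
begin

definition Phi :: "'z \<times> ('y,'g) letter list \<times> 'b \<times> ('x,'h) letter list \<Rightarrow> ('y \<times> 'g) list \<times> 'z \<times> 'b" where
  "Phi x = (case x of (w,q,c,p) \<Rightarrow> foldr actLt q (Psi w c p))"

lemma Phi_simp: "Phi (w,q,c,p) = foldr actLt q (Psi w c p)"
  unfolding Phi_def by simp

lemma fb_dom_iff: "(z,q,b,p) \<in> fb_dom B Y X d s \<longleftrightarrow>
  z \<in> bverts B \<and> valid_word Y q d (gob_lam B z) \<and> b \<in> gob_set B z \<and> valid_word X p (gob_rho B z) s"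
  unfolding fb_dom_def by simp

lemma Phi_gen:
  assumes g: "(x1,x2) \<in> fb_gen B Y X" and x1: "x1 \<in> fb_dom B Y X d s" and x2: "x2 \<in> fb_dom B Y X d s"
  shows "Phi x1 = Phi x2"
proof -
  from g consider
      (a) z q q' b p where "(x1,x2) = ((z, q, b, p), (z, q', b, p))" "(q, q') \<in> word_step Y"
    | (b) z q b p p' where "(x1,x2) = ((z, q, b, p), (z, q, b, p'))" "(p, p') \<in> word_step X"
    | (c) z q g b p where "(x1,x2) = ((z, q @ [Elt (gob_lam B z) g], b, p), (z, q, gob_lact B z g b, p))"
    | (d) z q b h p where "(x1,x2) = ((z, q, gob_ract B z b h, p), (z, q, b, Elt (gob_rho B z) h # p))"
    | (e) e q b p where "(x1,x2) = ((gob_src B e, q, gob_csrc B e b, p),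
       (btgt B e, q @ [Gen (gob_lam B e)], bplus B e b, Gen (gog_rev X (gob_rho B e)) # p))"
       "e \<in> bedges B" "b \<in> gob_set B e"
    unfolding fb_gen_def
    apply (elim UnE CollectE exE conjE)
        apply (erule (1) that(1))
       apply (erule (1) that(2))
      apply (erule that(3))
     apply (erule that(4))
    apply (erule (2) that(5))
    done
  then show ?thesis
  proof cases
    case a
    have xx: "x1 = (z, q, b, p)" "x2 = (z, q', b, p)" using a by auto
    note D1 = x1[unfolded xx fb_dom_iff] and D2 = x2[unfolded xx fb_dom_iff]
    have V: "vnf (gob_lam B z) (Psi z b p)" using QP_D(1)[OF QP_all] D1 by blast
    show ?thesis unfolding xx Phi_simp using step_Y[OF a(2) _ _ V] D1 D2 by blast
  next
    case b
    have xx: "x1 = (z, q, b, p)" "x2 = (z, q, b, p')" using b by auto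
    note D1 = x1[unfolded xx fb_dom_iff] and D2 = x2[unfolded xx fb_dom_iff]
    show ?thesis unfolding xx Phi_simp using step_X[OF b(2)] D1 D2 by metis
  next
    case c
    have xx: "x1 = (z, q @ [Elt (gob_lam B z) g], b, p)" "x2 = (z, q, gob_lact B z g b, p)" using c by auto
    note D1 = x1[unfolded xx fb_dom_iff]
    obtain m where "valid_word Y q d m" "valid_word Y [Elt (gob_lam B z) g] m (gob_lam B z)"
      using D1 valid_word_append[OF grY] by blast
    then have gc: "g \<in> carrier (GG (gob_lam B z))" by auto
    have "Psi z (gob_lact B z g b) p = actG g (Psi z b p)" using QP_D(2)[OF QP_all _ _ _ gc] D1 by blast
    then show ?thesis unfolding xx Phi_simp by simp
  next
    case d
    have xx: "x1 = (z, q, gob_ract B z b h, p)" "x2 = (z, q, b, Elt (gob_rho B z) h # p)" using d by auto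
    show ?thesis unfolding xx Phi_simp by simp
  next
    case e
    have xx: "x1 = (gob_src B e, q, gob_csrc B e b, p)"
      "x2 = (btgt B e, q @ [Gen (gob_lam B e)], bplus B e b, Gen (gog_rev X (gob_rho B e)) # p)" using e by auto
    note D1 = x1[unfolded xx fb_dom_iff]
    have BF: "actE (gob_lam B e) (Psi (btgt B e) (bplus B e b) (Gen (gog_rev X (gob_rho B e)) # p)) =
       Psi (gob_src B e) (gob_csrc B e b) p" using back_forth[OF e(2) e(3)] D1 by blast
    show ?thesis unfolding xx Phi_simp by (simp del: Psi.simps add: BF)
  qed
qed

lemma Phi_rel: "(x1,x2) \<in> fb_rel B Y X d s \<Longrightarrow> Phi x1 = Phi x2"
  unfolding fb_rel_def by (rule eqc_inv[where F = Phi]) (rule Phi_gen)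

end



theorem mainTheorem18:
  fixes B :: "('z, 'y, 'x, 'b, 'g, 'h) gob"
    and Y :: "('y, 'g) gog"
    and X :: "('x, 'h) gog"
    and z :: 'z
  assumes "graph_of_bisets B Y X"
    and "left_fibrant B Y X"
    and "\<forall>y\<in>gog_car Y. inj_on (gog_hsrc Y y) (carrier (gog_grp Y y))"
    and "z \<in> bverts B"
  shows "nat_map B Y X z ` gob_set B z \<subseteq> fund_biset B Y X (gob_lam B z) (gob_rho B z)
         \<and> inj_on (nat_map B Y X z) (gob_set B z)"
proof -
  interpret L: L18 B Y X using assms(1-3) by unfold_locales
  let ?d = "gob_lam B z" and ?s = "gob_rho B z"
  let ?R = "fb_rel B Y X ?d ?s"
  have dom: "\<And>b. b \<in> gob_set B z \<Longrightarrow> (z, [], b, []) \<in> fb_dom B Y X ?d ?s"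
    using L.bv_facts(1,2)[OF assms(4)] assms(4) unfolding L.fb_dom_iff by simp
  have part1: "nat_map B Y X z ` gob_set B z \<subseteq> fund_biset B Y X ?d ?s"
  proof
    fix C assume "C \<in> nat_map B Y X z ` gob_set B z"
    then obtain b where b: "b \<in> gob_set B z" "C = nat_map B Y X z b" by blast
    show "C \<in> fund_biset B Y X ?d ?s"
      unfolding b(2) nat_map_def fund_biset_def by (rule quotientI[OF dom[OF b(1)]])
  qed
  have part2: "inj_on (nat_map B Y X z) (gob_set B z)"
  proof (rule inj_onI)
    fix b1 b2 assume b1: "b1 \<in> gob_set B z" and b2: "b2 \<in> gob_set B z"
      and eq: "nat_map B Y X z b1 = nat_map B Y X z b2"
    have "(z, [], b2, []) \<in> ?R `` {(z, [], b2, [])}"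
      unfolding fb_rel_def using eqc_refl[OF dom[OF b2]] by simp
    then have "(z, [], b2, []) \<in> ?R `` {(z, [], b1, [])}" using eq unfolding nat_map_def by simp
    then have "((z, [], b1, []), (z, [], b2, [])) \<in> ?R" by simp
    then have "L.Phi (z, [], b1, []) = L.Phi (z, [], b2, [])" by (rule L.Phi_rel)
    then show "b1 = b2" unfolding L.Phi_simp by simp
  qed
  show ?thesis using part1 part2 by blast
qed


end
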